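(* For every $d>0$, the Domino game problem on $\mathbb{Z}^d$ (given a finite alphabet $\mathcal{A}$ and a finite set $\mathcal{F}$ of finite patterns on $\mathbb{Z}^d$, decide whether player $A$ has a winning strategy in $\Gamma(\mathcal{A},\mathcal{F},\mathbb{Z}^d)$) is in $\Sigma^0_1$, i.e. is recursively enumerable.
   Context: Fix $d\ge 1$ and a finite alphabet $\mathcal{A}$. A pattern is a pair $p=(S,f)$ with $S\subseteq\mathbb{Z}^d$ (its support) and $f\in\mathcal{A}^S$. A finite pattern $q=(S',g)$ appears in a pattern $p=(S,f)$ if there is $v\in\mathbb{Z}^d$ with $v+S'\subseteq S$ and $f(v+j)=g(j)$ for all $j\in S'$. For a finite set $\mathcal{F}$ of finite patterns and $E\subseteq\mathbb{Z}^d$, the Domino game $\Gamma(\mathcal{A},\mathcal{F},E)$ is played by two players $A$ and $B$ who alternate turns, $A$ moving first, starting from the empty pattern. On each turn the current player either passes, or chooses a cell $i\in E$ not yet coloured and a colour $a\in\mathcal{A}$ and colours $i$ with $a$. As soon as some pattern of $\mathcal{F}$ appears in the current pattern, the game ends and $A$ wins; the game also ends if all of $E$ is coloured. $B$ wins if no pattern of $\mathcal{F}$ ever appears. A strategy is winning for a player if that player wins every game in which they follow it. *)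

theory Defs
  imports Main "HOL-Library.Nat_Bijection"
begin

datatype recf = Zero | Succ | Proj nat | Comp recf "recf list"
  | PrimRec recf recf | Mini recf

inductive eval :: "recf \<Rightarrow> nat list \<Rightarrow> nat \<Rightarrow> bool" where
  eval_Zero: "eval Zero xs 0"
| eval_Succ: "eval Succ (x # xs) (Suc x)"
| eval_Proj: "i < length xs \<Longrightarrow> eval (Proj i) xs (xs ! i)"
| eval_Comp: "list_all2 (\<lambda>g y. eval g xs y) gs ys \<Longrightarrow> eval f ys z \<Longrightarrow> eval (Comp f gs) xs z"
| eval_Prim0: "eval f xs y \<Longrightarrow> eval (PrimRec f g) (0 # xs) y"
| eval_PrimS: "eval (PrimRec f g) (n # xs) y \<Longrightarrow> eval g (n # y # xs) z
     \<Longrightarrow> eval (PrimRec f g) (Suc n # xs) z"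
| eval_Mini: "eval f (y # xs) 0 \<Longrightarrow> (\<forall>z<y. \<exists>w. eval f (z # xs) (Suc w))
     \<Longrightarrow> eval (Mini f) xs y"

definition r_e :: "nat set \<Rightarrow> bool" where
  "r_e S \<longleftrightarrow> (\<exists>f. \<forall>n. n \<in> S \<longleftrightarrow> (\<exists>y. eval f [n] y))"

text \<open>Cells of Z^d are int lists of length d; the alphabet is {0..<k};
  a finite pattern is represented as a list of (cell, colour) pairs.\<close>

type_synonym cell = "int list"
type_synonym fpattern = "(cell \<times> nat) list"

definition wf_pattern :: "nat \<Rightarrow> nat \<Rightarrow> fpattern \<Rightarrow> bool" where
  "wf_pattern d k q \<longleftrightarrow> distinct (map fst q) \<and> (\<forall>(j, a) \<in> set q. length j = d \<and> a < k)"

definition wf_instance :: "nat \<Rightarrow> nat \<Rightarrow> fpattern list \<Rightarrow> bool" where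
  "wf_instance d k F \<longleftrightarrow> (\<forall>q \<in> set F. wf_pattern d k q)"

definition appears :: "nat \<Rightarrow> fpattern \<Rightarrow> (cell \<rightharpoonup> nat) \<Rightarrow> bool" where
  "appears d q p \<longleftrightarrow> (\<exists>v. length v = d \<and> (\<forall>(j, a) \<in> set q. p (map2 (+) v j) = Some a))"

datatype move = Pass | Col cell nat

fun legal :: "nat \<Rightarrow> nat \<Rightarrow> (cell \<rightharpoonup> nat) \<Rightarrow> move \<Rightarrow> bool" where
  "legal d k p Pass = True"
| "legal d k p (Col c a) = (length c = d \<and> c \<notin> dom p \<and> a < k)"

fun pos :: "(nat \<Rightarrow> move) \<Rightarrow> nat \<Rightarrow> (cell \<rightharpoonup> nat)" where
  "pos m 0 = Map.empty"
| "pos m (Suc n) = (case m n of Pass \<Rightarrow> pos m n | Col c a \<Rightarrow> (pos m n)(c \<mapsto> a))"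

text \<open>Player A (moving at even times 0,2,4,...) has a winning strategy in
  Gamma({0..<k}, F, Z^d): a strategy (function of the history) such that in every
  play where A follows it and B plays legally, all moves are legal until some
  pattern of F appears.\<close>
definition A_wins :: "nat \<Rightarrow> nat \<Rightarrow> fpattern list \<Rightarrow> bool" where
  "A_wins d k F \<longleftrightarrow> (\<exists>\<sigma> :: move list \<Rightarrow> move. \<forall>m :: nat \<Rightarrow> move.
     (\<forall>i. m (2*i) = \<sigma> (map m [0..<2*i])) \<and>
     (\<forall>i. legal d k (pos m (2*i+1)) (m (2*i+1)))
     \<longrightarrow> (\<exists>n. (\<forall>i<n. legal d k (pos m i) (m i)) \<and> (\<exists>q \<in> set F. appears d q (pos m n))))"

definition code_cell :: "cell \<Rightarrow> nat" where
  "code_cell c = list_encode (map int_encode c)"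

definition code_pattern :: "fpattern \<Rightarrow> nat" where
  "code_pattern q = list_encode (map (\<lambda>(c, a). prod_encode (code_cell c, a)) q)"

definition code_instance :: "nat \<Rightarrow> fpattern list \<Rightarrow> nat" where
  "code_instance k F = prod_encode (k, list_encode (map code_pattern F))"

definition domino_problem :: "nat \<Rightarrow> nat set" where
  "domino_problem d = {code_instance k F | k F. wf_instance d k F \<and> A_wins d k F}"

end

theory Submission
  imports Defs
begin


fun rpos :: "move list \<Rightarrow> cell \<Rightarrow> nat option" where
  "rpos [] = Map.empty"
| "rpos (Pass # h) = rpos h"
| "rpos (Col x a # h) = (rpos h)(x \<mapsto> a)"

definition pat :: "nat \<Rightarrow> fpattern list \<Rightarrow> (cell \<Rightarrow> nat option) \<Rightarrow> bool" where
  "pat d Fs p \<longleftrightarrow> (\<exists>q\<in>set Fs. appears d q p)"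

definition mvs :: "nat \<Rightarrow> cell set \<Rightarrow> move set" where
  "mvs k E = {Pass} \<union> {Col x c | x c. x \<in> E \<and> c < k}"

inductive win for d :: nat and k :: nat and Fs :: "fpattern list" and E :: "cell set" where
  wbase: "pat d Fs (rpos h) \<Longrightarrow> win d k Fs E h"
| wstep: "a \<in> mvs k E \<Longrightarrow> legal d k (rpos h) a \<Longrightarrow>
    (\<And>b. b \<in> mvs k E \<Longrightarrow> legal d k (rpos (a # h)) b \<Longrightarrow> win d k Fs E (b # a # h)) \<Longrightarrow> win d k Fs E h"

definition nrm :: "cell \<Rightarrow> nat" where "nrm x = sum_list (map (\<lambda>z. nat \<bar>z\<bar>) x)"
definition ER :: "nat \<Rightarrow> nat \<Rightarrow> cell set" where "ER d R = {x. length x = d \<and> nrm x \<le> R}"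

lemma appears_mono: "appears d q p \<Longrightarrow> p \<subseteq>\<^sub>m p' \<Longrightarrow> appears d q p'"
  unfolding appears_def map_le_def by (fastforce simp: dom_def)

lemma pat_mono: "pat d Fs p \<Longrightarrow> p \<subseteq>\<^sub>m p' \<Longrightarrow> pat d Fs p'"
  unfolding pat_def using appears_mono by blast

lemma pos_rpos: "pos m n = rpos (rev (map m [0..<n]))"
  by (induction n) (auto split: move.splits)

lemma legal_upd_le: "legal d k p b \<Longrightarrow> p \<subseteq>\<^sub>m (case b of Pass \<Rightarrow> p | Col c a \<Rightarrow> p(c \<mapsto> a))"
  by (cases b) (auto simp: map_le_def)

fun xcells :: "move list \<Rightarrow> move list \<Rightarrow> cell set" where
  "xcells (Col y b # cs) (Pass # rs) = insert y (xcells cs rs)"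
| "xcells (_ # cs) (_ # rs) = xcells cs rs"
| "xcells _ _ = {}"

definition cellsof :: "move list \<Rightarrow> cell set" where
  "cellsof r = {x. \<exists>a. Col x a \<in> set r}"

definition rel :: "move list \<Rightarrow> move list \<Rightarrow> bool" where
  "rel c r \<longleftrightarrow> list_all2 (\<lambda>cm rm. cm = rm \<or> rm = Pass) c r"

lemma cellsof_simps[simp]: "cellsof [] = {}" "cellsof (Pass # h) = cellsof h"
  "cellsof (Col x a # h) = insert x (cellsof h)"
  by (auto simp: cellsof_def)

lemma dom_rpos: "dom (rpos r) = cellsof r"
proof (induction r rule: rpos.induct)
  case (3 x a h)
  have "dom (rpos (Col x a # h)) = insert x (dom (rpos h))"
    unfolding rpos.simps by (rule dom_fun_upd[THEN trans]) simp
  then show ?case using 3 by (simp only: cellsof_simps)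
qed simp_all

lemma finite_cellsof: "finite (cellsof r)"
  by (induction r rule: rpos.induct) simp_all

lemma xcells_same[simp]: "xcells (m # cs) (m # rs) = xcells cs rs"
  by (cases m) auto

lemma rel_le:
  "rel c r \<Longrightarrow> xcells c r \<inter> cellsof r = {} \<Longrightarrow> rpos r \<subseteq>\<^sub>m rpos c"
  unfolding rel_def
proof (induction rule: list_all2_induct)
  case Nil then show ?case by simp
next
  case (Cons cm cs rm rs)
  have d: "xcells cs rs \<inter> cellsof rs = {}"
    using Cons.prems by (cases cm; cases rm) (auto simp: cellsof_def)
  note IH = Cons.IH[OF d]
  show ?case
  proof (cases "rm = Pass")
    case True
    show ?thesis
    proof (cases cm)
      case Pass then show ?thesis using True IH by simp
    next
      case (Col y b)
      have "y \<notin> cellsof rs" using Cons.prems True Col by (auto simp: cellsof_def)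
      then have "y \<notin> dom (rpos rs)" by (simp add: dom_rpos)
      then show ?thesis using True Col IH by (auto simp: map_le_def)
    qed
  next
    case False
    then have "cm = rm" using Cons.hyps by auto
    then show ?thesis using IH by (cases rm) (auto simp: map_le_def)
  qed
qed

lemma rel_dom1: "rel c r \<Longrightarrow> dom (rpos r) \<subseteq> dom (rpos c)"
  unfolding rel_def dom_rpos
proof (induction rule: list_all2_induct)
  case Nil then show ?case by simp
next
  case (Cons x xs y ys)
  then show ?case by (cases x; cases y) auto
qed

lemma rel_dom2: "rel c r \<Longrightarrow> dom (rpos c) \<subseteq> dom (rpos r) \<union> xcells c r"
  unfolding rel_def dom_rpos
proof (induction rule: list_all2_induct)
  case Nil then show ?case by simp
next
  case (Cons x xs y ys)
  then show ?case by (cases x; cases y) auto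
qed


lemma nrm_ge: "z \<in> set x \<Longrightarrow> nat \<bar>z\<bar> \<le> nrm x"
  unfolding nrm_def by (induction x) auto

lemma finite_ER: "finite (ER d R)"
proof (rule finite_subset)
  show "ER d R \<subseteq> {xs. set xs \<subseteq> {- int R..int R} \<and> length xs = d}"
    unfolding ER_def using nrm_ge by fastforce
  show "finite {xs. set xs \<subseteq> {- int R..int R} \<and> length xs = d}"
    by (rule finite_lists_length_eq) simp
qed

lemma finite_mvs: "finite E \<Longrightarrow> finite (mvs k E)"
proof -
  assume "finite E"
  have "mvs k E = insert Pass ((\<lambda>(x, c). Col x c) ` (E \<times> {..<k}))"
    unfolding mvs_def by auto
  then show ?thesis using \<open>finite E\<close> by simp
qed

lemma legal_dom: "dom p \<subseteq> dom p' \<Longrightarrow> legal d k p' b \<Longrightarrow> legal d k p b"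
  by (cases b) auto

lemma rel_Cons: "rel c r \<Longrightarrow> (cm = rm \<or> rm = Pass) \<Longrightarrow> rel (cm # c) (rm # r)"
  unfolding rel_def by simp

lemma pigeon: "infinite A \<Longrightarrow> f ` A \<subseteq> M \<Longrightarrow> finite M \<Longrightarrow> \<exists>b. infinite {x\<in>A. f x = b}"
  using pigeonhole_infinite[of A f] finite_subset by blast

context
  fixes d k :: nat and Fs :: "fpattern list" and \<sigma> :: "move list \<Rightarrow> move"
begin

definition near :: "nat \<Rightarrow> move \<Rightarrow> bool" where
  "near D b \<longleftrightarrow> (case b of Pass \<Rightarrow> True | Col y c \<Rightarrow> nrm y \<le> D)"

definition bf :: "move \<Rightarrow> (nat \<Rightarrow> move list) \<Rightarrow> nat \<Rightarrow> move" where
  "bf a c R = (SOME b. b \<in> mvs k (ER d R) \<and> legal d k (rpos (a # c R)) b \<and> \<not> win d k Fs (ER d R) (b # a # c R))"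

definition S1f :: "nat set \<Rightarrow> (nat \<Rightarrow> move list) \<Rightarrow> move \<Rightarrow> nat set" where
  "S1f S c a = {R\<in>S. a \<in> mvs k (ER d R) \<and> legal d k (rpos (c R)) a}"
definition NA :: "nat set \<Rightarrow> move \<Rightarrow> (nat \<Rightarrow> move list) \<Rightarrow> nat \<Rightarrow> nat set" where
  "NA S1 a c D = {R\<in>S1. near D (bf a c R)}"
definition DA :: "nat set \<Rightarrow> move \<Rightarrow> (nat \<Rightarrow> move list) \<Rightarrow> nat" where
  "DA S1 a c = (SOME D. infinite (NA S1 a c D))"
definition b0A :: "nat set \<Rightarrow> move \<Rightarrow> (nat \<Rightarrow> move list) \<Rightarrow> move" where
  "b0A S1 a c = (SOME b0. infinite {R \<in> NA S1 a c (DA S1 a c). bf a c R = b0})"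

definition step :: "nat set \<times> (nat \<Rightarrow> move list) \<times> move list \<Rightarrow> nat set \<times> (nat \<Rightarrow> move list) \<times> move list" where
  "step st = (let S = fst st; c = fst (snd st); r = snd (snd st); a = \<sigma> (rev r) in
   if \<not> legal d k (rpos r) a then (S, \<lambda>R. Pass # a # c R, Pass # a # r)
   else let S1 = S1f S c a in
     if \<exists>D. infinite (NA S1 a c D) then
        let b0 = b0A S1 a c in
        ({R \<in> NA S1 a c (DA S1 a c). bf a c R = b0}, \<lambda>R. b0 # a # c R,
          (if legal d k (rpos (a # r)) b0 then b0 else Pass) # a # r)
     else ({R\<in>S1. bf a c R \<noteq> Pass}, \<lambda>R. bf a c R # a # c R, Pass # a # r))"

primrec st :: "nat \<Rightarrow> nat set \<times> (nat \<Rightarrow> move list) \<times> move list" where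
  "st 0 = (UNIV, \<lambda>R. [], [])"
| "st (Suc i) = step (st i)"

lemma step_il: "\<not> legal d k (rpos r) (\<sigma> (rev r)) \<Longrightarrow>
   step (S, c, r) = (S, \<lambda>R. Pass # \<sigma> (rev r) # c R, Pass # \<sigma> (rev r) # r)"
  unfolding step_def Let_def fst_conv snd_conv by (simp only: if_True not_False_eq_True)

lemma step_A: "legal d k (rpos r) (\<sigma> (rev r)) \<Longrightarrow> \<exists>D. infinite (NA (S1f S c (\<sigma> (rev r))) (\<sigma> (rev r)) c D) \<Longrightarrow>
   step (S, c, r) = (let a = \<sigma> (rev r); S1 = S1f S c a; b0 = b0A S1 a c in
      ({R \<in> NA S1 a c (DA S1 a c). bf a c R = b0}, \<lambda>R. b0 # a # c R,
          (if legal d k (rpos (a # r)) b0 then b0 else Pass) # a # r))"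
  unfolding step_def Let_def fst_conv snd_conv by (simp only: if_True if_False not_True_eq_False)

lemma step_B: "legal d k (rpos r) (\<sigma> (rev r)) \<Longrightarrow> \<not> (\<exists>D. infinite (NA (S1f S c (\<sigma> (rev r))) (\<sigma> (rev r)) c D)) \<Longrightarrow>
   step (S, c, r) = (let a = \<sigma> (rev r); S1 = S1f S c a in
     ({R\<in>S1. bf a c R \<noteq> Pass}, \<lambda>R. bf a c R # a # c R, Pass # a # r))"
  unfolding step_def Let_def fst_conv snd_conv by (simp only: if_True if_False not_True_eq_False)

lemma rr_Suc: "\<exists>b. snd (snd (st (Suc i))) = b # \<sigma> (rev (snd (snd (st i)))) # snd (snd (st i)) \<and>
    legal d k (rpos (\<sigma> (rev (snd (snd (st i)))) # snd (snd (st i)))) b"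
proof -
  obtain S c r where x: "st i = (S, c, r)" by (cases "st i")
  show ?thesis
  proof (cases "legal d k (rpos r) (\<sigma> (rev r))")
    case False
    then show ?thesis using x by (simp add: step_il)
  next
    case True
    show ?thesis
    proof (cases "\<exists>D. infinite (NA (S1f S c (\<sigma> (rev r))) (\<sigma> (rev r)) c D)")
      case True2: True
      show ?thesis using x step_A[OF True True2] by (simp add: Let_def)
    next
      case False
      show ?thesis using x step_B[OF True False] by (simp add: Let_def)
    qed
  qed
qed

lemma len_rr: "length (snd (snd (st i))) = 2 * i"
proof (induction i)
  case 0 then show ?case by simp
next
  case (Suc i) then show ?case using rr_Suc[of i] by auto
qed

lemma rr_prefix: "i0 \<le> i \<Longrightarrow> \<exists>xs. rev (snd (snd (st i))) = rev (snd (snd (st i0))) @ xs"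
proof (induction i)
  case 0 then show ?case by simp
next
  case (Suc i)
  show ?case
  proof (cases "i0 = Suc i")
    case True then show ?thesis by simp
  next
    case False
    then obtain xs where "rev (snd (snd (st i))) = rev (snd (snd (st i0))) @ xs" using Suc by auto
    then show ?thesis using rr_Suc[of i] by auto
  qed
qed

definition mm :: "nat \<Rightarrow> move" where
  "mm j = rev (snd (snd (st (Suc (j div 2))))) ! j"

lemma mm_hist: "map mm [0..<2*i] = rev (snd (snd (st i)))"
proof (rule nth_equalityI)
  show "length (map mm [0..<2 * i]) = length (rev (snd (snd (st i))))" by (simp add: len_rr)
  fix j assume "j < length (map mm [0..<2 * i])"
  then have j: "j < 2 * i" by simp
  then have le: "Suc (j div 2) \<le> i" by linarith
  obtain xs where "rev (snd (snd (st i))) = rev (snd (snd (st (Suc (j div 2))))) @ xs"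
    using rr_prefix[OF le] by blast
  moreover have "j < length (rev (snd (snd (st (Suc (j div 2))))))"
    using len_rr[of "Suc (j div 2)"] by simp
  ultimately show "map mm [0..<2 * i] ! j = rev (snd (snd (st i))) ! j"
    using j by (simp add: mm_def nth_append)
qed

lemma mm_A: "mm (2 * i) = \<sigma> (map mm [0..<2*i])"
proof -
  obtain b where b: "snd (snd (st (Suc i))) = b # \<sigma> (rev (snd (snd (st i)))) # snd (snd (st i))"
    using rr_Suc[of i] by blast
  have "mm (2 * i) = rev (snd (snd (st (Suc i)))) ! (2 * i)" by (simp add: mm_def)
  also have "\<dots> = \<sigma> (rev (snd (snd (st i))))" using b by (simp add: nth_append len_rr)
  finally show ?thesis by (simp add: mm_hist)
qed

lemma mm_B: "legal d k (pos mm (2 * i + 1)) (mm (2 * i + 1))"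
proof -
  obtain b where b: "snd (snd (st (Suc i))) = b # \<sigma> (rev (snd (snd (st i)))) # snd (snd (st i))"
    and l: "legal d k (rpos (\<sigma> (rev (snd (snd (st i)))) # snd (snd (st i)))) b"
    using rr_Suc[of i] by blast
  have "map mm [0..<2*(Suc i)] = rev (snd (snd (st (Suc i))))" by (rule mm_hist)
  then have h: "map mm [0..<2*i+2] = rev (snd (snd (st i))) @ [\<sigma> (rev (snd (snd (st i)))), b]"
    using b by simp
  have nth: "mm j = (rev (snd (snd (st i))) @ [\<sigma> (rev (snd (snd (st i)))), b]) ! j" if "j < 2*i+2" for j
  proof -
    have "map mm [0..<2*i+2] ! j = mm j" using that by (simp del: upt_Suc)
    then show ?thesis using h by metis
  qed
  have "map mm [0..<2*i+1] = rev (snd (snd (st i))) @ [\<sigma> (rev (snd (snd (st i))))]"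
  proof (rule nth_equalityI)
    show "length (map mm [0..<2*i+1]) = length (rev (snd (snd (st i))) @ [\<sigma> (rev (snd (snd (st i))))])"
      by (simp add: len_rr)
    fix j assume "j < length (map mm [0..<2*i+1])"
    then have j: "j < 2*i+1" by simp
    then show "map mm [0..<2*i+1] ! j = (rev (snd (snd (st i))) @ [\<sigma> (rev (snd (snd (st i))))]) ! j"
      using nth[of j] j by (cases "j = 2*i") (auto simp: nth_append len_rr)
  qed
  moreover have "mm (2 * i + 1) = b" using nth[of "2*i+1"] by (simp add: nth_append len_rr)
  ultimately show ?thesis using l by (simp add: pos_rpos)
qed

definition InvS :: "nat set \<Rightarrow> (nat \<Rightarrow> move list) \<Rightarrow> move list \<Rightarrow> bool" where
  "InvS S c r \<longleftrightarrow> infinite S \<and> (\<forall>R\<in>S. \<not> win d k Fs (ER d R) (c R) \<and> rel (c R) r) \<and>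
     (\<forall>D. finite {R\<in>S. \<exists>y\<in>xcells (c R) r. nrm y \<le> D})"

lemma Inv_step:
  assumes I: "InvS S c r" and L: "legal d k (rpos r) (\<sigma> (rev r))"
  shows "InvS (fst (step (S, c, r))) (fst (snd (step (S, c, r)))) (snd (snd (step (S, c, r))))"
proof -
  define a where "a = \<sigma> (rev r)"
  have inf: "infinite S" and nw: "\<And>R. R \<in> S \<Longrightarrow> \<not> win d k Fs (ER d R) (c R)"
    and rl: "\<And>R. R \<in> S \<Longrightarrow> rel (c R) r"
    and far: "\<And>D. finite {R\<in>S. \<exists>y\<in>xcells (c R) r. nrm y \<le> D}"
    using I unfolding InvS_def by auto
  define S1 where "S1 = S1f S c a"
  have S1S: "S1 \<subseteq> S" unfolding S1_def S1f_def by auto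
  have finS1: "finite (S - S1)"
  proof (cases a)
    case Pass
    then have "S1 = S" unfolding S1_def S1f_def mvs_def by auto
    then show ?thesis by simp
  next
    case (Col x col)
    have lx: "length x = d" "x \<notin> dom (rpos r)" "col < k" using L Col a_def by auto
    have "S - S1 \<subseteq> {..<nrm x} \<union> {R\<in>S. \<exists>y\<in>xcells (c R) r. nrm y \<le> nrm x}"
    proof
      fix R assume R: "R \<in> S - S1"
      show "R \<in> {..<nrm x} \<union> {R\<in>S. \<exists>y\<in>xcells (c R) r. nrm y \<le> nrm x}"
      proof (cases "nrm x \<le> R")
        case True
        then have "a \<in> mvs k (ER d R)" using Col lx unfolding mvs_def ER_def by auto
        then have "\<not> legal d k (rpos (c R)) a" using R unfolding S1_def S1f_def by auto
        then have "x \<in> dom (rpos (c R))" using Col lx by auto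
        then have "x \<in> xcells (c R) r" using rel_dom2[OF rl[of R]] R lx by auto
        then show ?thesis using R by auto
      qed simp
    qed
    moreover have "finite ({..<nrm x} \<union> {R\<in>S. \<exists>y\<in>xcells (c R) r. nrm y \<le> nrm x})"
      using far by simp
    ultimately show ?thesis by (rule finite_subset)
  qed
  have infS1: "infinite S1"
  proof
    assume "finite S1"
    then have "finite (S1 \<union> (S - S1))" using finS1 by simp
    moreover have "S1 \<union> (S - S1) = S" using S1S by auto
    ultimately show False using inf by simp
  qed
  have spec: "bf a c R \<in> mvs k (ER d R) \<and> legal d k (rpos (a # c R)) (bf a c R) \<and>
      \<not> win d k Fs (ER d R) (bf a c R # a # c R)" if R: "R \<in> S1" for R
  proof -
    have RS: "R \<in> S" and am: "a \<in> mvs k (ER d R)" and al: "legal d k (rpos (c R)) a"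
      using R unfolding S1_def S1f_def by auto
    have "\<exists>b. b \<in> mvs k (ER d R) \<and> legal d k (rpos (a # c R)) b \<and> \<not> win d k Fs (ER d R) (b # a # c R)"
    proof (rule ccontr)
      assume "\<not> ?thesis"
      then have "win d k Fs (ER d R) (c R)" using am al by (blast intro: wstep)
      then show False using nw[OF RS] by simp
    qed
    then show ?thesis unfolding bf_def by (rule someI_ex)
  qed
  have relA: "rel (a # c R) (a # r)" if "R \<in> S" for R using rl[OF that] by (simp add: rel_Cons)
  show ?thesis
  proof (cases "\<exists>D. infinite (NA S1 a c D)")
    case True
    have stp: "step (S, c, r) = ({R \<in> NA S1 a c (DA S1 a c). bf a c R = b0A S1 a c},
        \<lambda>R. b0A S1 a c # a # c R, (if legal d k (rpos (a # r)) (b0A S1 a c) then b0A S1 a c else Pass) # a # r)"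
      using step_A[of r S c] L True unfolding a_def S1_def by (simp add: Let_def)
    define D0 where "D0 = DA S1 a c"
    have infNA: "infinite (NA S1 a c D0)" unfolding D0_def DA_def using True by (rule someI_ex)
    define M where "M = insert Pass ((\<lambda>(y, col). Col y col) ` (ER d D0 \<times> {..<k}))"
    have finM: "finite M" unfolding M_def using finite_ER by simp
    have subM: "bf a c ` NA S1 a c D0 \<subseteq> M"
    proof
      fix b assume "b \<in> bf a c ` NA S1 a c D0"
      then obtain R where R: "R \<in> S1" "near D0 (bf a c R)" "b = bf a c R" unfolding NA_def by auto
      then have "b \<in> mvs k (ER d R)" using spec by auto
      then show "b \<in> M" using R unfolding M_def mvs_def near_def ER_def by auto
    qed
    have "\<exists>b. infinite {R \<in> NA S1 a c D0. bf a c R = b}" by (rule pigeon[OF infNA subM finM])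
    then have infS': "infinite {R \<in> NA S1 a c D0. bf a c R = b0A S1 a c}"
      unfolding b0A_def D0_def by (rule someI_ex)
    define S' where "S' = {R \<in> NA S1 a c D0. bf a c R = b0A S1 a c}"
    have S'S1: "S' \<subseteq> S1" unfolding S'_def NA_def by auto
    obtain R0 where R0: "R0 \<in> S'" using infS' unfolding S'_def by (metis finite.emptyI ex_in_conv)
    have "legal d k (rpos (a # c R0)) (b0A S1 a c)" using spec[of R0] R0 S'S1 unfolding S'_def by auto
    moreover have "dom (rpos (a # r)) \<subseteq> dom (rpos (a # c R0))" using relA[of R0] R0 S'S1 S1S rel_dom1 by blast
    ultimately have g: "legal d k (rpos (a # r)) (b0A S1 a c)" using legal_dom by blast
    show ?thesis
      unfolding stp fst_conv snd_conv InvS_def D0_def[symmetric] S'_def[symmetric] using g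
    proof (simp only: if_True, intro conjI ballI allI)
      show "infinite S'" using infS' unfolding S'_def .
    next
      fix R assume R: "R \<in> S'"
      then have "bf a c R = b0A S1 a c" "R \<in> S1" using S'S1 unfolding S'_def by auto
      then show "\<not> win d k Fs (ER d R) (b0A S1 a c # a # c R)" using spec[of R] by auto
      show "rel (b0A S1 a c # a # c R) (b0A S1 a c # a # r)" using relA[of R] R S'S1 S1S by (auto simp: rel_Cons)
    next
      fix D
      have "{R \<in> S'. \<exists>y\<in>xcells (b0A S1 a c # a # c R) (b0A S1 a c # a # r). nrm y \<le> D}
         \<subseteq> {R\<in>S. \<exists>y\<in>xcells (c R) r. nrm y \<le> D}" using S'S1 S1S by auto
      then show "finite {R \<in> S'. \<exists>y\<in>xcells (b0A S1 a c # a # c R) (b0A S1 a c # a # r). nrm y \<le> D}"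
        using far finite_subset by blast
    qed
  next
    case False
    have stp: "step (S, c, r) = ({R\<in>S1. bf a c R \<noteq> Pass}, \<lambda>R. bf a c R # a # c R, Pass # a # r)"
      using step_B[of r S c] L False unfolding a_def S1_def by (simp add: Let_def)
    define S' where "S' = {R\<in>S1. bf a c R \<noteq> Pass}"
    have "S1 - S' \<subseteq> NA S1 a c 0" unfolding S'_def NA_def near_def by auto
    then have "finite (S1 - S')" using False finite_subset by blast
    then have infS': "infinite S'"
      by (metis Diff_infinite_finite Diff_partition infS1 S'_def mem_Collect_eq subsetI Un_infinite)
    have S'S1: "S' \<subseteq> S1" unfolding S'_def by auto
    show ?thesis
      unfolding stp fst_conv snd_conv InvS_def S'_def[symmetric]
    proof (intro conjI ballI allI)
      show "infinite S'" by (rule infS')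
    next
      fix R assume R: "R \<in> S'"
      then show "\<not> win d k Fs (ER d R) (bf a c R # a # c R)" using spec[of R] S'S1 by auto
      show "rel (bf a c R # a # c R) (Pass # a # r)" using relA[of R] R S'S1 S1S by (auto simp: rel_Cons)
    next
      fix D
      have "{R \<in> S'. \<exists>y\<in>xcells (bf a c R # a # c R) (Pass # a # r). nrm y \<le> D}
         \<subseteq> NA S1 a c D \<union> {R\<in>S. \<exists>y\<in>xcells (c R) r. nrm y \<le> D}"
      proof
        fix R assume R: "R \<in> {R \<in> S'. \<exists>y\<in>xcells (bf a c R # a # c R) (Pass # a # r). nrm y \<le> D}"
        then obtain y where y: "y \<in> xcells (bf a c R # a # c R) (Pass # a # r)" "nrm y \<le> D" and RS': "R \<in> S'" by auto
        obtain y' col' where b: "bf a c R = Col y' col'" using RS' unfolding S'_def by (cases "bf a c R") auto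
        have "y = y' \<or> y \<in> xcells (c R) r" using y b by simp
        then show "R \<in> NA S1 a c D \<union> {R\<in>S. \<exists>y\<in>xcells (c R) r. nrm y \<le> D}"
          using y b RS' S'S1 S1S unfolding NA_def near_def by auto
      qed
      moreover have "finite (NA S1 a c D \<union> {R\<in>S. \<exists>y\<in>xcells (c R) r. nrm y \<le> D})"
        using False far by auto
      ultimately show "finite {R \<in> S'. \<exists>y\<in>xcells (bf a c R # a # c R) (Pass # a # r). nrm y \<le> D}"
        by (rule finite_subset)
    qed
  qed
qed

lemma Inv_all:
  assumes nw: "\<forall>R. \<not> win d k Fs (ER d R) []"
    and leg: "\<forall>j<2*i. legal d k (pos mm j) (mm j)"
  shows "InvS (fst (st i)) (fst (snd (st i))) (snd (snd (st i)))"
  using leg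
proof (induction i)
  case 0
  show ?case unfolding InvS_def using nw by (simp add: rel_def)
next
  case (Suc i)
  have IH: "InvS (fst (st i)) (fst (snd (st i))) (snd (snd (st i)))" using Suc by auto
  have "legal d k (pos mm (2*i)) (mm (2*i))" using Suc.prems by auto
  then have L: "legal d k (rpos (snd (snd (st i)))) (\<sigma> (rev (snd (snd (st i)))))"
    by (simp add: pos_rpos mm_hist mm_A)
  obtain S c r where x: "st i = (S, c, r)" by (cases "st i")
  show ?case using Inv_step[of S c r] IH L x by simp
qed

lemma mm_not_win_even:
  assumes nw: "\<forall>R. \<not> win d k Fs (ER d R) []"
    and leg: "\<forall>j<2*i. legal d k (pos mm j) (mm j)"
  shows "\<not> pat d Fs (pos mm (2*i))"
proof
  assume P: "pat d Fs (pos mm (2*i))"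
  obtain S c r where x: "st i = (S, c, r)" by (cases "st i")
  have I: "InvS S c r" using Inv_all[OF nw leg] x by simp
  have pr: "pos mm (2*i) = rpos r" using x by (simp add: pos_rpos mm_hist)
  define D where "D = Max (insert 0 (nrm ` cellsof r))"
  have Dge: "y \<in> cellsof r \<Longrightarrow> nrm y \<le> D" for y
    unfolding D_def using finite_cellsof by (intro Max_ge) auto
  have "finite {R\<in>S. \<exists>y\<in>xcells (c R) r. nrm y \<le> D}" "infinite S" using I unfolding InvS_def by auto
  then obtain R where R: "R \<in> S" "R \<notin> {R\<in>S. \<exists>y\<in>xcells (c R) r. nrm y \<le> D}"
    by (metis (no_types, lifting) finite_subset subsetI)
  have disj: "xcells (c R) r \<inter> cellsof r = {}" using R Dge by auto
  have "rel (c R) r" "\<not> win d k Fs (ER d R) (c R)" using I R unfolding InvS_def by auto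
  then have le: "rpos r \<subseteq>\<^sub>m rpos (c R)" using rel_le disj by blast
  have "pat d Fs (rpos (c R))" using pat_mono P pr le by metis
  then have "win d k Fs (ER d R) (c R)" by (rule wbase)
  then show False using \<open>\<not> win d k Fs (ER d R) (c R)\<close> by simp
qed

lemma mm_not_win:
  assumes nw: "\<forall>R. \<not> win d k Fs (ER d R) []"
    and leg: "\<forall>j<n. legal d k (pos mm j) (mm j)"
  shows "\<not> pat d Fs (pos mm n)"
proof (cases "even n")
  case True
  then obtain i where "n = 2*i" by blast
  then show ?thesis using mm_not_win_even[OF nw] leg by simp
next
  case False
  then obtain i where n: "n = 2*i+1" using oddE by blast
  have leg2: "\<forall>j<2*(Suc i). legal d k (pos mm j) (mm j)"
    using leg mm_B[of i] n by (auto simp: less_Suc_eq)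
  have e: "pos mm (Suc (2*i+1)) = (case mm (2*i+1) of Pass \<Rightarrow> pos mm (2*i+1) | Col c a \<Rightarrow> (pos mm (2*i+1))(c \<mapsto> a))"
    by (simp only: pos.simps)
  have "pos mm n \<subseteq>\<^sub>m pos mm (Suc n)"
    unfolding n e by (rule legal_upd_le[OF mm_B[of i]])
  then show ?thesis using mm_not_win_even[OF nw leg2] pat_mono n by fastforce
qed

end

theorem compactness:
  assumes "A_wins d k Fs"
  shows "\<exists>R. win d k Fs (ER d R) []"
proof (rule ccontr)
  assume nw: "\<not> (\<exists>R. win d k Fs (ER d R) [])"
  obtain \<sigma> where \<sigma>: "\<forall>m :: nat \<Rightarrow> move.
     (\<forall>i. m (2*i) = \<sigma> (map m [0..<2*i])) \<and>
     (\<forall>i. legal d k (pos m (2*i+1)) (m (2*i+1)))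
     \<longrightarrow> (\<exists>n. (\<forall>i<n. legal d k (pos m i) (m i)) \<and> (\<exists>q \<in> set Fs. appears d q (pos m n)))"
    using assms unfolding A_wins_def by blast
  let ?m = "mm d k Fs \<sigma>"
  have "\<exists>n. (\<forall>i<n. legal d k (pos ?m i) (?m i)) \<and> (\<exists>q \<in> set Fs. appears d q (pos ?m n))"
    using \<sigma> mm_A mm_B by blast
  then obtain n where "\<forall>i<n. legal d k (pos ?m i) (?m i)" "pat d Fs (pos ?m n)"
    unfolding pat_def by blast
  then show False using mm_not_win[of d k Fs] nw by blast
qed


datatype exp = Z | S exp | V nat | Rec exp exp exp | Lift exp | Skip1 exp | Let exp exp

primrec ev :: "exp \<Rightarrow> nat list \<Rightarrow> nat" where
  "ev Z env = 0"
| "ev (S e) env = Suc (ev e env)"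
| "ev (V i) env = (if i < length env then env ! i else 0)"
| "ev (Rec a b s) env = rec_nat (ev b env) (\<lambda>k r. ev s (k # r # env)) (ev a env)"
| "ev (Lift e) env = ev e (tl env)"
| "ev (Skip1 e) env = ev e (take 1 env @ drop 2 env)"
| "ev (Let e b) env = ev b (ev e env # env)"

primrec compile :: "nat \<Rightarrow> exp \<Rightarrow> recf" where
  "compile n Z = Zero"
| "compile n (S e) = Comp Succ [compile n e]"
| "compile n (V i) = (if i < n then Proj i else Zero)"
| "compile n (Rec a b s) = Comp (PrimRec (compile n b) (compile (Suc (Suc n)) s)) (compile n a # map Proj [0..<n])"
| "compile n (Lift e) = Comp (compile (n - 1) e) (map Proj [1..<n])"
| "compile n (Skip1 e) = Comp (compile (if 2 \<le> n then n - 1 else n) e) (map Proj ([0..<min n 1] @ [2..<n]))"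
| "compile n (Let e b) = Comp (compile (Suc n) b) (compile n e # map Proj [0..<n])"

inductive_cases evalZeroE: "eval Zero xs y"
inductive_cases evalSuccE: "eval Succ xs y"
inductive_cases evalProjE: "eval (Proj i) xs y"
inductive_cases evalCompE: "eval (Comp f gs) xs y"
inductive_cases evalPrimE: "eval (PrimRec f g) xs y"

lemma projs_eval:
  assumes "\<forall>i\<in>set ps. i < length xs"
  shows "list_all2 (\<lambda>g y. eval g xs y) (map Proj ps) ys \<longleftrightarrow> ys = map (nth xs) ps"
  using assms
proof (induction ps arbitrary: ys)
  case Nil then show ?case by simp
next
  case (Cons i ps)
  have e: "eval (Proj i) xs y \<longleftrightarrow> y = xs ! i" for y
    using Cons.prems by (auto elim: evalProjE intro: eval_Proj)
  show ?case
  proof (cases ys)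
    case Nil then show ?thesis by simp
  next
    case (Cons y ys')
    then show ?thesis using e Cons.IH Cons.prems by simp
  qed
qed

lemma map_nth_upt: "b \<le> length xs \<Longrightarrow> map (nth xs) [a..<b] = take (b - a) (drop a xs)"
  by (rule nth_equalityI) auto

lemma prim_eval:
  assumes f: "\<And>y. eval f xs y \<longleftrightarrow> y = F"
    and g: "\<And>k r y. eval g (k # r # xs) y \<longleftrightarrow> y = G k r"
  shows "eval (PrimRec f g) (v # xs) y \<longleftrightarrow> y = rec_nat F G v"
proof (induction v arbitrary: y)
  case 0
  show ?case
  proof
    assume "eval (PrimRec f g) (0 # xs) y"
    then show "y = rec_nat F G 0" by (cases rule: evalPrimE) (auto simp: f)
  next
    assume "y = rec_nat F G 0"
    then show "eval (PrimRec f g) (0 # xs) y" using f by (auto intro: eval_Prim0)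
  qed
next
  case (Suc v)
  show ?case
  proof
    assume "eval (PrimRec f g) (Suc v # xs) y"
    then show "y = rec_nat F G (Suc v)" by (cases rule: evalPrimE) (auto simp: Suc.IH g)
  next
    assume "y = rec_nat F G (Suc v)"
    then show "eval (PrimRec f g) (Suc v # xs) y"
      using Suc.IH g by (auto intro: eval_PrimS)
  qed
qed

lemma comp_eval:
  assumes gs: "\<And>ys. list_all2 (\<lambda>g y. eval g xs y) gs ys \<longleftrightarrow> ys = vs"
    and f: "\<And>y. eval f vs y \<longleftrightarrow> y = F"
  shows "eval (Comp f gs) xs y \<longleftrightarrow> y = F"
proof
  assume "eval (Comp f gs) xs y"
  then show "y = F" by (cases rule: evalCompE) (use gs f in auto)
next
  assume "y = F"
  then show "eval (Comp f gs) xs y" using gs f by (auto intro: eval_Comp)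
qed

lemma cons_all2:
  assumes "\<And>y. eval g xs y \<longleftrightarrow> y = v"
    and "\<And>ys. list_all2 (\<lambda>g y. eval g xs y) gs ys \<longleftrightarrow> ys = vs"
  shows "list_all2 (\<lambda>g y. eval g xs y) (g # gs) ys \<longleftrightarrow> ys = v # vs"
  using assms by (cases ys) auto

lemma compile_correct:
  "length env = n \<Longrightarrow> eval (compile n e) env y \<longleftrightarrow> y = ev e env"
proof (induction e arbitrary: n env y)
  case Z
  then show ?case by (auto elim: evalZeroE intro: eval_Zero)
next
  case (S e)
  have "eval Succ [ev e env] y \<longleftrightarrow> y = Suc (ev e env)" for y
    by (auto elim: evalSuccE intro: eval_Succ)
  then show ?case
    apply simp
    apply (rule comp_eval[OF cons_all2[OF S.IH[OF S.prems]]])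
    by auto
next
  case (V i)
  then show ?case by (auto elim: evalZeroE evalProjE intro: eval_Zero eval_Proj)
next
  case (Rec a b s)
  have pr: "\<forall>i\<in>set [0..<n]. i < length env" using Rec.prems by auto
  have p: "eval (PrimRec (compile n b) (compile (Suc (Suc n)) s)) (v # env) y
      \<longleftrightarrow> y = rec_nat (ev b env) (\<lambda>k r. ev s (k # r # env)) v" for v y
    by (rule prim_eval) (use Rec.prems Rec.IH(2,3) in auto)
  show ?case
    apply simp
    apply (rule comp_eval[OF cons_all2[OF Rec.IH(1)[OF Rec.prems]]])
     apply (subst projs_eval[OF pr])
     apply (simp add: map_nth_upt Rec.prems)
    apply (rule p)
    done
next
  case (Lift e)
  have pr: "\<forall>i\<in>set [1..<n]. i < length env" using Lift.prems by auto
  have l: "map (nth env) [1..<n] = tl env"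
    using Lift.prems by (simp add: map_nth_upt drop_Suc)
  show ?case
    apply (simp only: compile.simps ev.simps)
    apply (rule comp_eval)
     apply (subst projs_eval[OF pr])
     apply (simp only: l)
    apply (rule Lift.IH)
    using Lift.prems by simp
next
  case (Skip1 e)
  have pr: "\<forall>i\<in>set ([0..<min n 1] @ [2..<n]). i < length env" using Skip1.prems by auto
  have l: "map (nth env) ([0..<min n 1] @ [2..<n]) = take 1 env @ drop 2 env"
    using Skip1.prems by (auto simp: map_nth_upt min_def)
  have len: "length (take 1 env @ drop 2 env) = (if 2 \<le> n then n - 1 else n)"
    using Skip1.prems by auto
  show ?case
    apply (simp only: compile.simps ev.simps)
    apply (rule comp_eval)
     apply (subst projs_eval[OF pr])
     apply (simp only: l)
    apply (rule Skip1.IH[OF len])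
    done
next
  case (Let e b)
  have pr: "\<forall>i\<in>set [0..<n]. i < length env" using Let.prems by auto
  show ?case
    apply (simp only: compile.simps ev.simps)
    apply (rule comp_eval[OF cons_all2[OF Let.IH(1)[OF Let.prems]]])
     apply (subst projs_eval[OF pr])
     apply (simp add: map_nth_upt Let.prems)
    apply (rule Let.IH(2))
    using Let.prems by simp
qed

lemma re_from_exp:
  assumes "\<And>n. n \<in> A \<longleftrightarrow> (\<exists>c. ev e [c, n] = 0)"
  shows "r_e A"
  unfolding r_e_def
proof (intro exI allI)
  fix n
  let ?F = "compile 2 e"
  have cc: "eval ?F [c, n] y \<longleftrightarrow> y = ev e [c, n]" for c y
    by (rule compile_correct) simp
  show "n \<in> A \<longleftrightarrow> (\<exists>y. eval (Mini ?F) [n] y)"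
  proof
    assume "n \<in> A"
    then obtain c where c: "ev e [c, n] = 0" using assms by blast
    define c0 where "c0 = (LEAST c. ev e [c, n] = 0)"
    have c0: "ev e [c0, n] = 0" unfolding c0_def by (rule LeastI[of _ c], rule c)
    have lt: "\<forall>z<c0. \<exists>w. eval ?F (z # [n]) (Suc w)"
    proof (intro allI impI)
      fix z assume "z < c0"
      then have "ev e [z, n] \<noteq> 0" unfolding c0_def using not_less_Least by blast
      then have "eval ?F [z, n] (Suc (ev e [z, n] - 1))" using cc by simp
      then show "\<exists>w. eval ?F (z # [n]) (Suc w)" by auto
    qed
    have "eval (Mini ?F) [n] c0"
      by (rule eval_Mini) (use cc c0 lt in auto)
    then show "\<exists>y. eval (Mini ?F) [n] y" by blast
  next
    assume "\<exists>y. eval (Mini ?F) [n] y"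
    then obtain y where "eval (Mini ?F) [n] y" by blast
    then have "eval ?F [y, n] 0" by (cases rule: eval.cases) auto
    then have "ev e [y, n] = 0" using cc by simp
    then show "n \<in> A" using assms by blast
  qed
qed


primrec num :: "nat \<Rightarrow> exp" where
  "num 0 = Z" | "num (Suc n) = S (num n)"
lemma ev_num[simp]: "ev (num n) env = n" by (induction n) auto

definition "Pred a = Rec a Z (V 0)"
definition "Add a b = Rec a b (S (V 1))"
definition "Sub a b = Rec b a (Pred (V 1))"
definition "IsZ a = Rec a (S Z) Z"
definition "Conj a b = IsZ (Add (IsZ a) (IsZ b))"
definition "Eq a b = IsZ (Add (Sub a b) (Sub b a))"
definition "Lt a b = IsZ (Sub (S a) b)"
definition "Ite c a b = Rec (IsZ c) a (Lift (Lift b))"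
definition "BEx bnd body = Rec bnd Z (Add (V 1) (Skip1 body))"
definition "BAll bnd body = IsZ (BEx bnd (IsZ body))"
definition "Tri a = Rec a Z (Add (V 1) (S (V 0)))"
definition "SD a = Rec a Z (Ite (Eq (S (V 0)) (Tri (S (V 1)))) (S (V 1)) (V 1))"
definition "Fst a = Let a (Sub (V 0) (Tri (SD (V 0))))"
definition "Snd a = Let a (Sub (SD (V 0)) (Fst (V 0)))"
definition "Pr a b = Add (Tri (Add a b)) a"
definition "Hd c = Fst (Pred c)"
definition "Tl c = Snd (Pred c)"
definition "DropC i c = Rec i c (Tl (V 1))"
definition "Even a = Rec a (S Z) (IsZ (V 1))"
definition "Half a = Rec a Z (Ite (Even (V 0)) (V 1) (S (V 1)))"

lemma ev_Pred[simp]: "ev (Pred a) env = ev a env - 1"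
  unfolding Pred_def by (cases "ev a env") auto
lemma ev_Add[simp]: "ev (Add a b) env = ev a env + ev b env"
proof -
  have "rec_nat x (\<lambda>k r. Suc r) v = v + x" for x v by (induction v) auto
  then show ?thesis unfolding Add_def by simp
qed
lemma ev_Sub[simp]: "ev (Sub a b) env = ev a env - ev b env"
proof -
  have "rec_nat x (\<lambda>k r. r - 1) v = x - v" for x v by (induction v) auto
  then show ?thesis unfolding Sub_def by simp
qed
lemma ev_IsZ[simp]: "ev (IsZ a) env = (if ev a env = 0 then 1 else 0)"
  unfolding IsZ_def by (cases "ev a env") auto
lemma ev_Conj[simp]: "ev (Conj a b) env = (if ev a env = 0 \<or> ev b env = 0 then 0 else 1)"
  unfolding Conj_def by simp
lemma ev_Eq[simp]: "ev (Eq a b) env = (if ev a env = ev b env then 1 else 0)"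
  unfolding Eq_def by simp
lemma ev_Lt[simp]: "ev (Lt a b) env = (if ev a env < ev b env then 1 else 0)"
  unfolding Lt_def by simp
lemma ev_Ite[simp]: "ev (Ite c a b) env = (if ev c env = 0 then ev b env else ev a env)"
  unfolding Ite_def by simp
lemma ev_BEx[simp]: "ev (BEx bnd body) env = 0 \<longleftrightarrow> (\<forall>z < ev bnd env. ev body (z # env) = 0)"
proof -
  have "rec_nat 0 (\<lambda>k r. r + ev body (k # env)) v = 0 \<longleftrightarrow> (\<forall>z < v. ev body (z # env) = 0)" for v
    by (induction v) (auto simp: less_Suc_eq)
  then show ?thesis unfolding BEx_def by simp
qed
lemma ev_BAll[simp]: "ev (BAll bnd body) env = 0 \<longleftrightarrow> (\<exists>z < ev bnd env. ev body (z # env) = 0)"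
  unfolding BAll_def by auto
lemma ev_Tri[simp]: "ev (Tri a) env = triangle (ev a env)"
proof -
  have "rec_nat 0 (\<lambda>k r. r + Suc k) v = triangle v" for v by (induction v) auto
  then show ?thesis unfolding Tri_def by simp
qed

definition sd :: "nat \<Rightarrow> nat" where
  "sd n = rec_nat 0 (\<lambda>k r. if Suc k = triangle (Suc r) then Suc r else r) n"

lemma sd_bounds: "triangle (sd n) \<le> n \<and> n < triangle (Suc (sd n))"
proof (induction n)
  case 0 then show ?case by (simp add: sd_def)
next
  case (Suc n)
  have e: "sd (Suc n) = (if Suc n = triangle (Suc (sd n)) then Suc (sd n) else sd n)"
    by (simp add: sd_def)
  show ?case using Suc by (simp only: e) auto
qed

lemma ev_SD[simp]: "ev (SD a) env = sd (ev a env)"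
proof -
  have "(\<lambda>k r. ev (Ite (Eq (S (V 0)) (Tri (S (V 1)))) (S (V 1)) (V 1)) (k # r # env))
     = (\<lambda>k r. if Suc k = triangle (Suc r) then Suc r else r)"
    by (intro ext) (simp del: triangle_Suc)
  then show ?thesis unfolding SD_def sd_def by (simp del: triangle_Suc)
qed

lemma prod_decode_sd: "prod_decode n = (n - triangle (sd n), sd n - (n - triangle (sd n)))"
proof -
  let ?s = "sd n" let ?x = "n - triangle (sd n)"
  have b: "triangle ?s \<le> n" "n < triangle ?s + Suc ?s" using sd_bounds[of n] by auto
  then have "?x \<le> ?s" by linarith
  then have "prod_encode (?x, ?s - ?x) = n" unfolding prod_encode_def using b by simp
  then show ?thesis by (metis prod_encode_inverse)
qed

lemma ev_Fst[simp]: "ev (Fst a) env = fst (prod_decode (ev a env))"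
  unfolding Fst_def by (simp add: prod_decode_sd)
lemma ev_Snd[simp]: "ev (Snd a) env = snd (prod_decode (ev a env))"
  unfolding Snd_def by (simp add: prod_decode_sd)
lemma ev_Pair[simp]: "ev (Pr a b) env = prod_encode (ev a env, ev b env)"
  unfolding Pr_def by (simp add: prod_encode_def)

definition hdc :: "nat \<Rightarrow> nat" where "hdc n = fst (prod_decode (n - 1))"
definition tlc :: "nat \<Rightarrow> nat" where "tlc n = snd (prod_decode (n - 1))"
definition dropc :: "nat \<Rightarrow> nat \<Rightarrow> nat" where "dropc i n = (tlc ^^ i) n"

lemma ev_Hd[simp]: "ev (Hd c) env = hdc (ev c env)" unfolding Hd_def hdc_def by simp
lemma ev_Tl[simp]: "ev (Tl c) env = tlc (ev c env)" unfolding Tl_def tlc_def by simp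
lemma ev_DropC[simp]: "ev (DropC i c) env = dropc (ev i env) (ev c env)"
proof -
  have "rec_nat x (\<lambda>k r. tlc r) v = (tlc ^^ v) x" for x v by (induction v) auto
  then show ?thesis unfolding DropC_def dropc_def by simp
qed
lemma ev_Even[simp]: "ev (Even a) env = 0 \<longleftrightarrow> odd (ev a env)"
proof -
  have "rec_nat (1::nat) (\<lambda>k r. if r = 0 then 1 else 0) v = 0 \<longleftrightarrow> odd v" for v :: nat
    by (induction v) auto
  then show ?thesis unfolding Even_def by simp
qed
lemma ev_Half[simp]: "ev (Half a) env = ev a env div 2"
proof -
  have "rec_nat 0 (\<lambda>k r. if odd k then Suc r else r) v = v div 2" for v :: nat
    by (induction v) auto
  then show ?thesis unfolding Half_def by (simp cong: if_cong)
qed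

lemma pd0: "prod_decode 0 = (0, 0)"
proof -
  have "prod_encode (0, 0) = 0" by (simp add: prod_encode_def)
  then show ?thesis by (metis prod_encode_inverse)
qed
lemma hdc_Suc[simp]: "hdc (Suc (prod_encode (x, y))) = x" by (simp add: hdc_def)
lemma tlc_Suc[simp]: "tlc (Suc (prod_encode (x, y))) = y" by (simp add: tlc_def)
lemma tlc_00[simp]: "tlc 0 = 0" by (simp add: tlc_def pd0)
lemma hdc_enc[simp]: "hdc (list_encode (x # xs)) = x" by (simp add: hdc_def)
lemma tlc_enc[simp]: "tlc (list_encode (x # xs)) = list_encode xs" by (simp add: tlc_def)
lemma tlc_0[simp]: "tlc (list_encode []) = list_encode []" by (simp add: tlc_def pd0)
lemma dropc_Suc: "dropc (Suc i) n = dropc i (tlc n)"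
  by (simp only: dropc_def funpow_Suc_right comp_apply)
lemma dropc_0[simp]: "dropc i 0 = 0"
  by (induction i) (auto simp: dropc_Suc, simp add: dropc_def)
lemma dropc_enc[simp]: "dropc i (list_encode xs) = list_encode (drop i xs)"
proof (induction i arbitrary: xs)
  case 0 then show ?case by (simp add: dropc_def)
next
  case (Suc i)
  have "dropc (Suc i) n = dropc i (tlc n)" for n
    by (simp only: dropc_def funpow_Suc_right comp_apply)
  then show ?case using Suc by (cases xs) auto
qed

lemma length_le_enc: "length xs \<le> list_encode xs"
proof (induction xs)
  case Nil then show ?case by simp
next
  case (Cons x xs)
  then show ?case using le_prod_encode_2[of "list_encode xs" x] by simp
qed

lemma enc_0_iff[simp]: "list_encode xs = 0 \<longleftrightarrow> xs = []"
  by (cases xs) auto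

definition "ExE c body = BEx c (Conj (IsZ (IsZ (DropC (V 0) (Lift c)))) (Let (Hd (DropC (V 0) (Lift c))) (Skip1 body)))"
definition "AllE c body = IsZ (ExE c (IsZ body))"

lemma ex_elem_code:
  "(\<exists>z < list_encode xs. dropc z (list_encode xs) \<noteq> 0 \<and> P (hdc (dropc z (list_encode xs))))
   \<longleftrightarrow> (\<exists>x\<in>set xs. P x)"
proof
  assume "\<exists>z < list_encode xs. dropc z (list_encode xs) \<noteq> 0 \<and> P (hdc (dropc z (list_encode xs)))"
  then obtain z where z: "drop z xs \<noteq> []" "P (hdc (list_encode (drop z xs)))" by auto
  then have "z < length xs" by auto
  then have "drop z xs = xs ! z # drop (Suc z) xs" by (simp add: Cons_nth_drop_Suc)
  then show "\<exists>x\<in>set xs. P x" using z \<open>z < length xs\<close> by (metis hdc_enc nth_mem)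
next
  assume "\<exists>x\<in>set xs. P x"
  then obtain z where z: "z < length xs" "P (xs ! z)" by (metis in_set_conv_nth)
  then have d: "drop z xs = xs ! z # drop (Suc z) xs" by (simp add: Cons_nth_drop_Suc)
  have "z < list_encode xs" using z length_le_enc[of xs] by linarith
  then show "\<exists>z < list_encode xs. dropc z (list_encode xs) \<noteq> 0 \<and> P (hdc (dropc z (list_encode xs)))"
    using z d by (intro exI[of _ z]) (simp del: enc_0_iff)
qed

lemma ev_ExE[simp]:
  assumes "ev c env = list_encode xs"
  shows "ev (ExE c body) env = 0 \<longleftrightarrow> (\<forall>x\<in>set xs. ev body (x # env) = 0)"
proof -
  have "ev (ExE c body) env \<noteq> 0 \<longleftrightarrow>
    (\<exists>z < list_encode xs. dropc z (list_encode xs) \<noteq> 0 \<and> ev body (hdc (dropc z (list_encode xs)) # env) \<noteq> 0)"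
    unfolding ExE_def using assms by auto
  then show ?thesis using ex_elem_code[of xs "\<lambda>x. ev body (x # env) \<noteq> 0"] by auto
qed

lemma ev_AllE[simp]:
  assumes "ev c env = list_encode xs"
  shows "ev (AllE c body) env = 0 \<longleftrightarrow> (\<exists>x\<in>set xs. ev body (x # env) = 0)"
  unfolding AllE_def using assms by simp


fun enc_move :: "move \<Rightarrow> nat" where
  "enc_move Pass = 0"
| "enc_move (Col x a) = Suc (prod_encode (code_cell x, a))"

definition enc_hist :: "move list \<Rightarrow> nat" where
  "enc_hist t = list_encode (map enc_move t)"

definition enc_cert :: "cell list \<Rightarrow> move list list \<Rightarrow> nat" where
  "enc_cert E T = prod_encode (list_encode (map code_cell E), list_encode (map enc_hist T))"

lemma inj_code_cell: "inj code_cell"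
  unfolding code_cell_def inj_def
  by (metis list.inj_map_strong list_encode_eq int_encode_eq)

lemma code_cell_eq[simp]: "code_cell x = code_cell y \<longleftrightarrow> x = y"
  using inj_code_cell by (auto dest: injD)

lemma enc_move_eq[simp]: "enc_move a = enc_move b \<longleftrightarrow> a = b"
  by (cases a; cases b) auto

lemma enc_hist_eq[simp]: "enc_hist a = enc_hist b \<longleftrightarrow> a = b"
  unfolding enc_hist_def list_encode_eq
  by (metis list.inj_map_strong enc_move_eq)

lemma enc_hist_Cons: "enc_hist (m # t) = Suc (prod_encode (enc_move m, enc_hist t))"
  by (simp add: enc_hist_def)

lemma enc_hist_Nil: "enc_hist [] = 0"
  by (simp add: enc_hist_def)

definition CellOf :: "exp \<Rightarrow> exp" where "CellOf m = Fst (Pred m)"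
definition ColOf :: "exp \<Rightarrow> exp" where "ColOf m = Snd (Pred m)"

lemma ev_CellOf[simp]: "ev (CellOf m) env = fst (prod_decode (ev m env - 1))"
  unfolding CellOf_def by simp
lemma ev_ColOf[simp]: "ev (ColOf m) env = snd (prod_decode (ev m env - 1))"
  unfolding ColOf_def by simp


lemma enc_move_0[simp]: "enc_move m = 0 \<longleftrightarrow> m = Pass"
  by (cases m) auto
lemma enc_move_pos[simp]: "0 < enc_move m \<longleftrightarrow> m \<noteq> Pass"
  by (cases m) auto

lemma hdc_dropc: "z < length ys \<Longrightarrow> hdc (dropc z (list_encode ys)) = ys ! z"
  by (simp add: Cons_nth_drop_Suc[symmetric])

lemma dropc_0_iff: "dropc z (list_encode ys) = 0 \<longleftrightarrow> length ys \<le> z"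
  by simp

lemma ev_ExE'[simp]:
  "ev (ExE c body) env = 0 \<longleftrightarrow> (\<forall>x\<in>set (list_decode (ev c env)). ev body (x # env) = 0)"
  by (rule ev_ExE) simp
lemma ev_AllE'[simp]:
  "ev (AllE c body) env = 0 \<longleftrightarrow> (\<exists>x\<in>set (list_decode (ev c env)). ev body (x # env) = 0)"
  by (rule ev_AllE) simp

declare ev_ExE[simp del] ev_AllE[simp del]

definition dec_cell :: "nat \<Rightarrow> cell" where "dec_cell n = map int_decode (list_decode n)"
lemma dec_cell_code[simp]: "dec_cell (code_cell x) = x"
  by (simp add: dec_cell_def code_cell_def comp_def)
lemma code_dec_cell[simp]: "code_cell (dec_cell n) = n"
  by (simp add: dec_cell_def code_cell_def comp_def)

definition dec_move :: "nat \<Rightarrow> move" where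
  "dec_move n = (if n = 0 then Pass else Col (dec_cell (fst (prod_decode (n - 1)))) (snd (prod_decode (n - 1))))"
lemma dec_move_enc[simp]: "dec_move (enc_move m) = m"
  by (cases m) (auto simp: dec_move_def)
lemma enc_dec_move[simp]: "enc_move (dec_move n) = n"
  by (cases n) (auto simp: dec_move_def)
lemma dec_move_Suc[simp]: "dec_move (Suc (prod_encode (x, a))) = Col (dec_cell x) a"
  by (simp add: dec_move_def)
lemma dec_move_0[simp]: "dec_move 0 = Pass"
  by (simp add: dec_move_def)

definition dec_hist :: "nat \<Rightarrow> move list" where
  "dec_hist n = map dec_move (list_decode n)"
lemma dec_hist_enc[simp]: "dec_hist (enc_hist h) = h"
  by (simp add: dec_hist_def enc_hist_def comp_def)
lemma dec_hist_Suc[simp]: "dec_hist (Suc (prod_encode (x, y))) = dec_move x # dec_hist y"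
  by (simp add: dec_hist_def)
lemma dec_hist_0[simp]: "dec_hist 0 = []"
  by (simp add: dec_hist_def)
lemma list_decode_hist: "list_decode n = map enc_move (dec_hist n)"
  by (simp add: dec_hist_def comp_def)

lemma enc_hist_mem[simp]: "enc_hist h \<in> enc_hist ` SS \<longleftrightarrow> h \<in> SS"
  by (metis enc_hist_eq image_iff)

fun freeL :: "move \<Rightarrow> move list \<Rightarrow> bool" where
  "freeL Pass h = True"
| "freeL (Col x a) h = (\<forall>mv\<in>set h. \<forall>a'. mv \<noteq> Col x a')"

definition FreeE :: "exp \<Rightarrow> exp \<Rightarrow> exp" where
  "FreeE m t = Add (IsZ m) (AllE t (Add (IsZ (V 0)) (IsZ (Eq (CellOf (V 0)) (CellOf (Lift m))))))"

fun cellc :: "move \<Rightarrow> nat" where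
  "cellc Pass = 0" | "cellc (Col x a) = code_cell x"
fun colc :: "move \<Rightarrow> nat" where
  "colc Pass = 0" | "colc (Col x a) = a"

lemma cellc_enc[simp]: "fst (prod_decode (enc_move m - 1)) = cellc m"
  by (cases m) (auto simp: pd0)
lemma colc_enc[simp]: "snd (prod_decode (enc_move m - 1)) = colc m"
  by (cases m) (auto simp: pd0)
lemma cellc_enc'[simp]: "fst (prod_decode (enc_move m - Suc 0)) = cellc m"
  by (cases m) (auto simp: pd0)
lemma colc_enc'[simp]: "snd (prod_decode (enc_move m - Suc 0)) = colc m"
  by (cases m) (auto simp: pd0)

lemma freeL_Col: "freeL (Col x a) h \<longleftrightarrow> \<not> (\<exists>mv\<in>set h. mv \<noteq> Pass \<and> cellc mv = code_cell x)"
proof -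
  have "mv \<noteq> Pass \<and> cellc mv = code_cell x \<longleftrightarrow> (\<exists>a'. mv = Col x a')" for mv
    by (cases mv) auto
  then show ?thesis by auto
qed

lemma ev_FreeE0:
  assumes "ev m env = enc_move mv" "ev t env = enc_hist h"
  shows "ev (FreeE m t) env = 0 \<longleftrightarrow> \<not> freeL mv h"
proof -
  have "ev (FreeE m t) env = 0 \<longleftrightarrow> mv \<noteq> Pass \<and> (\<exists>y\<in>set h. y \<noteq> Pass \<and> cellc y = cellc mv)"
    unfolding FreeE_def using assms by (simp add: enc_hist_def del: enc_move.simps) (metis gr_implies_not0)
  then show ?thesis by (cases mv) (auto simp del: freeL.simps(2) simp: freeL_Col)
qed

lemma ev_FreeE[simp]:
  "ev (FreeE m t) env = 0 \<longleftrightarrow> \<not> freeL (dec_move (ev m env)) (dec_hist (ev t env))"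
  by (rule ev_FreeE0) (simp_all add: enc_hist_def dec_hist_def comp_def)

definition MemE :: "exp \<Rightarrow> exp \<Rightarrow> exp" where
  "MemE x L = ExE L (Eq (V 0) (Lift x))"

lemma ev_MemE[simp]:
  "ev (MemE x L) env = 0 \<longleftrightarrow> ev x env \<notin> set (list_decode (ev L env))"
  unfolding MemE_def by auto

definition LenD :: "nat \<Rightarrow> exp \<Rightarrow> exp" where
  "LenD d x = (if d = 0 then IsZ x else Conj (IsZ (DropC (num d) x)) (DropC (num (d - 1)) x))"

lemma ev_LenD0:
  assumes "ev x env = list_encode ys"
  shows "ev (LenD d x) env = 0 \<longleftrightarrow> length ys \<noteq> d"
  unfolding LenD_def using assms by (cases "ys = []") (auto simp: le_diff_conv2)

lemma ev_LenD[simp]: "ev (LenD d x) env = 0 \<longleftrightarrow> length (list_decode (ev x env)) \<noteq> d"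
  by (rule ev_LenD0) simp

definition "mvsL Es k = {Pass} \<union> {Col x c | x c. x \<in> set Es \<and> c < k}"

definition ExMove :: "exp \<Rightarrow> exp \<Rightarrow> exp \<Rightarrow> exp" where
  "ExMove E k body = Add (Let Z body) (ExE E (BEx (Lift k) (Let (S (Pr (V 1) (V 0))) (Skip1 (Skip1 body)))))"

lemma ev_ExMove0:
  assumes "ev E env = list_encode (map code_cell Es)"
  shows "ev (ExMove E k body) env = 0 \<longleftrightarrow> (\<forall>mv\<in>mvsL Es (ev k env). ev body (enc_move mv # env) = 0)"
proof -
  have "ev (ExMove E k body) env = 0 \<longleftrightarrow>
     ev body (enc_move Pass # env) = 0 \<and>
     (\<forall>x\<in>set Es. \<forall>c < ev k env. ev body (enc_move (Col x c) # env) = 0)"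
    unfolding ExMove_def using assms by (simp add: ev_ExE)
  moreover have mv: "(\<forall>mv\<in>mvsL Es K. P (enc_move mv)) \<longleftrightarrow> P (enc_move Pass) \<and> (\<forall>x\<in>set Es. \<forall>c < K. P (enc_move (Col x c)))" for P K
    unfolding mvsL_def by (auto simp del: enc_move.simps)
  ultimately show ?thesis using mv[of "ev k env" "\<lambda>n. ev body (n # env) = 0"] by (simp del: enc_move.simps)
qed

lemma ev_ExMove[simp]:
  "ev (ExMove E k body) env = 0 \<longleftrightarrow>
    (\<forall>mv\<in>mvsL (map dec_cell (list_decode (ev E env))) (ev k env). ev body (enc_move mv # env) = 0)"
  by (rule ev_ExMove0) (simp add: comp_def)

definition AllMove :: "exp \<Rightarrow> exp \<Rightarrow> exp \<Rightarrow> exp" where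
  "AllMove E k body = IsZ (ExMove E k (IsZ body))"

lemma ev_AllMove[simp]:
  "ev (AllMove E k body) env = 0 \<longleftrightarrow>
    (\<exists>mv\<in>mvsL (map dec_cell (list_decode (ev E env))) (ev k env). ev body (enc_move mv # env) = 0)"
  unfolding AllMove_def by simp


definition cd :: "nat \<Rightarrow> nat \<Rightarrow> int" where "cd n l = int_decode (hdc (dropc l n))"

definition "Cm x = Hd (DropC (V 0) (Lift x))"
definition "Pp y = Ite (Even y) (Half y) Z"
definition "Nn y = Ite (Even y) Z (S (Half y))"

definition VecEqE :: "nat \<Rightarrow> exp \<Rightarrow> exp \<Rightarrow> exp \<Rightarrow> exp \<Rightarrow> exp" where
  "VecEqE d a b c e = BAll (num d)
     (Eq (Add (Add (Pp (Cm a)) (Pp (Cm b))) (Add (Nn (Cm c)) (Nn (Cm e))))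
         (Add (Add (Pp (Cm c)) (Pp (Cm e))) (Add (Nn (Cm a)) (Nn (Cm b)))))"

definition "Pn v = (if even v then v div 2 else (0::nat))"
definition "Nv v = (if even v then 0 else Suc (v div 2))"

lemma int_decode_PN: "int_decode v = int (Pn v) - int (Nv v)"
  unfolding int_decode_def sum_decode_def Pn_def Nv_def by auto

lemma ev_Pp[simp]: "ev (Pp y) env = Pn (ev y env)"
  unfolding Pp_def Pn_def by simp
lemma ev_Nn[simp]: "ev (Nn y) env = Nv (ev y env)"
  unfolding Nn_def Nv_def by simp
lemma ev_Cm[simp]: "ev (Cm x) (l # env) = hdc (dropc l (ev x env))"
  unfolding Cm_def by simp

definition vokn :: "nat \<Rightarrow> nat \<Rightarrow> nat \<Rightarrow> nat \<Rightarrow> nat \<Rightarrow> bool" where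
  "vokn d a b c e \<longleftrightarrow> (\<forall>l<d. cd a l + cd b l = cd c l + cd e l)"

lemma ev_VecEqE[simp]:
  "ev (VecEqE d a b c e) env = 0 \<longleftrightarrow> \<not> vokn d (ev a env) (ev b env) (ev c env) (ev e env)"
proof -
  have "Pn x + Pn y + (Nv z + Nv w) = Pn z + Pn w + (Nv x + Nv y) \<longleftrightarrow>
        int_decode x + int_decode y = int_decode z + int_decode w" for x y z w
    unfolding int_decode_PN by linarith
  then show ?thesis
    unfolding VecEqE_def vokn_def cd_def by simp blast
qed

definition patL :: "nat \<Rightarrow> fpattern list \<Rightarrow> move list \<Rightarrow> bool" where
  "patL d Fs h \<longleftrightarrow> (\<exists>q\<in>set Fs. q = [] \<or> (\<exists>m0\<in>set h. m0 \<noteq> Pass \<and>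
     (\<forall>(j, a)\<in>set q. \<exists>m'\<in>set h. m' \<noteq> Pass \<and> colc m' = a \<and>
        vokn d (cellc m') (fst (prod_decode (hdc (code_pattern q)))) (cellc m0) (code_cell j))))"

definition dec_pat :: "nat \<Rightarrow> fpattern" where
  "dec_pat n = map (\<lambda>y. (dec_cell (fst (prod_decode y)), snd (prod_decode y))) (list_decode n)"

lemma dec_pat_code[simp]: "dec_pat (code_pattern q) = q"
  unfolding dec_pat_def code_pattern_def by (induction q) auto

definition PatE :: "nat \<Rightarrow> exp \<Rightarrow> exp \<Rightarrow> exp" where
  "PatE d t F = ExE F (Add (IsZ (V 0)) (ExE (Lift t) (Conj (V 0) (AllE (V 1)
     (ExE (Lift (Lift (Lift t))) (Conj (V 0) (Conj (Eq (ColOf (V 0)) (Snd (V 1)))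
        (VecEqE d (CellOf (V 0)) (Fst (Hd (V 3))) (CellOf (V 2)) (Fst (V 1))))))))))"

lemma ev_PatE[simp]:
  "ev (PatE d t F) env = 0 \<longleftrightarrow> \<not> patL d (map dec_pat (list_decode (ev F env))) (dec_hist (ev t env))"
proof -
  define h where "h = dec_hist (ev t env)"
  define Fc where "Fc = list_decode (ev F env)"
  have th: "list_decode (ev t env) = map enc_move h" unfolding h_def by (simp add: list_decode_hist)
  have qd: "qc = code_pattern (dec_pat qc)" for qc
    unfolding dec_pat_def code_pattern_def by (simp add: comp_def case_prod_beta)
  have fc: "list_decode (ev F env) = map code_pattern (map dec_pat Fc)"
    unfolding Fc_def using qd by (metis map_idI map_map comp_apply)
  have lp: "list_decode (code_pattern q) = map (\<lambda>(c, a). prod_encode (code_cell c, a)) q" for q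
    by (simp add: code_pattern_def)
  have cpp: "0 < code_pattern q \<longleftrightarrow> q \<noteq> []" for q
    by (cases q) (auto simp: code_pattern_def)
  show ?thesis
    unfolding PatE_def patL_def
    apply (simp add: th fc lp split_beta cpp del: enc_move.simps)
    apply (simp add: h_def)
    by blast
qed

lemma hdc_drop: "z < length ys \<Longrightarrow> hdc (list_encode (drop z ys)) = ys ! z"
  using hdc_dropc by simp

definition DistE :: "exp \<Rightarrow> exp" where
  "DistE x = BAll x (BAll (Lift x) (Add (IsZ (Lt (V 1) (V 0))) (Add (IsZ (DropC (V 0) (Lift (Lift x))))
     (IsZ (Eq (Fst (Hd (DropC (V 1) (Lift (Lift x))))) (Fst (Hd (DropC (V 0) (Lift (Lift x))))))))))"

lemma ev_DistE[simp]:
  "ev (DistE x) env = 0 \<longleftrightarrow> \<not> distinct (map (\<lambda>y. fst (prod_decode y)) (list_decode (ev x env)))"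
proof -
  define ys where "ys = list_decode (ev x env)"
  have c: "ev x env = list_encode ys" unfolding ys_def by simp
  let ?f = "\<lambda>y. fst (prod_decode y)"
  have "ev (DistE x) env = 0 \<longleftrightarrow> (\<exists>z1 < list_encode ys. \<exists>z2 < list_encode ys. z1 < z2 \<and> drop z2 ys \<noteq> [] \<and>
      ?f (hdc (list_encode (drop z1 ys))) = ?f (hdc (list_encode (drop z2 ys))))"
    unfolding DistE_def using c by simp blast
  also have "\<dots> \<longleftrightarrow> (\<exists>z1 z2. z1 < z2 \<and> z2 < length ys \<and> ?f (ys ! z1) = ?f (ys ! z2))"
  proof
    assume "\<exists>z1 < list_encode ys. \<exists>z2 < list_encode ys. z1 < z2 \<and> drop z2 ys \<noteq> [] \<and>
      ?f (hdc (list_encode (drop z1 ys))) = ?f (hdc (list_encode (drop z2 ys)))"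
    then obtain z1 z2 where z: "z1 < z2" "drop z2 ys \<noteq> []"
      "?f (hdc (list_encode (drop z1 ys))) = ?f (hdc (list_encode (drop z2 ys)))" by blast
    then have "z2 < length ys" by simp
    then show "\<exists>z1 z2. z1 < z2 \<and> z2 < length ys \<and> ?f (ys ! z1) = ?f (ys ! z2)"
      using z hdc_drop[of z1 ys] hdc_drop[of z2 ys] by (intro exI[of _ z1] exI[of _ z2]) simp
  next
    assume "\<exists>z1 z2. z1 < z2 \<and> z2 < length ys \<and> ?f (ys ! z1) = ?f (ys ! z2)"
    then obtain z1 z2 where z: "z1 < z2" "z2 < length ys" "?f (ys ! z1) = ?f (ys ! z2)" by blast
    have "z2 < list_encode ys" using z length_le_enc[of ys] by linarith
    then show "\<exists>z1 < list_encode ys. \<exists>z2 < list_encode ys. z1 < z2 \<and> drop z2 ys \<noteq> [] \<and>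
      ?f (hdc (list_encode (drop z1 ys))) = ?f (hdc (list_encode (drop z2 ys)))"
      using z hdc_drop[of z1 ys] hdc_drop[of z2 ys] \<open>z2 < list_encode ys\<close>
      by (intro exI[of _ z1] conjI exI[of _ z2]) auto
  qed
  also have "\<dots> \<longleftrightarrow> \<not> distinct (map ?f ys)"
    unfolding distinct_conv_nth
  proof (auto)
    fix i j assume "i < length ys" "j < length ys" "i \<noteq> j" "?f (ys ! i) = ?f (ys ! j)"
    then show "\<exists>z1 z2. z1 < z2 \<and> z2 < length ys \<and> ?f (ys ! z1) = ?f (ys ! z2)"
      by (cases "i < j") (metis, metis nat_neq_iff)
  next
    fix z1 z2 assume "z1 < z2" "z2 < length ys" "?f (ys ! z1) = ?f (ys ! z2)"
    then show "\<exists>i<length ys. \<exists>j<length ys. i \<noteq> j \<and> ?f (ys ! i) = ?f (ys ! j)"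
      by (intro exI[of _ z1] conjI exI[of _ z2]) auto
  qed
  finally show ?thesis unfolding ys_def .
qed

definition WFE :: "nat \<Rightarrow> exp \<Rightarrow> exp \<Rightarrow> exp" where
  "WFE d F k = AllE F (Conj (DistE (V 0)) (AllE (V 0) (Conj (LenD d (Fst (V 0))) (Lt (Snd (V 0)) (Lift (Lift k))))))"

lemma len_code_cell[simp]: "length (list_decode (code_cell j)) = length j"
  by (simp add: code_cell_def)

lemma distinct_code_fst: "distinct (map (\<lambda>y. fst (prod_decode y)) (map (\<lambda>(c, a). prod_encode (code_cell c, a)) q))
   \<longleftrightarrow> distinct (map fst q)"
proof -
  have "map (\<lambda>y. fst (prod_decode y)) (map (\<lambda>(c, a). prod_encode (code_cell c, a)) q) = map code_cell (map fst q)"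
    by (induction q) auto
  then show ?thesis using inj_code_cell by (simp add: distinct_map inj_on_def)
qed

lemma ev_WFE[simp]:
  "ev (WFE d F k) env = 0 \<longleftrightarrow> \<not> wf_instance d (ev k env) (map dec_pat (list_decode (ev F env)))"
proof -
  define Fc where "Fc = list_decode (ev F env)"
  have qd: "qc = code_pattern (dec_pat qc)" for qc
    unfolding dec_pat_def code_pattern_def by (simp add: comp_def case_prod_beta)
  have fc: "list_decode (ev F env) = map code_pattern (map dec_pat Fc)"
    unfolding Fc_def using qd by (metis map_idI map_map comp_apply)
  have lp: "list_decode (code_pattern q) = map (\<lambda>(c, a). prod_encode (code_cell c, a)) q" for q
    by (simp add: code_pattern_def)
  show ?thesis
    unfolding WFE_def wf_instance_def wf_pattern_def
    apply (simp add: fc lp distinct_code_fst del: map_map)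
    apply (simp add: Fc_def split_beta)
    by blast
qed

definition certL :: "nat \<Rightarrow> nat \<Rightarrow> fpattern list \<Rightarrow> cell list \<Rightarrow> move list list \<Rightarrow> bool" where
  "certL d k Fs Es T \<longleftrightarrow> [] \<in> set T \<and> (\<forall>x\<in>set Es. length x = d) \<and>
    (\<forall>t\<in>set T. patL d Fs t \<or> (\<exists>a\<in>mvsL Es k. freeL a t \<and>
        (\<forall>b\<in>mvsL Es k. freeL b (a # t) \<longrightarrow> b # a # t \<in> set T)))"

definition CertB :: "nat \<Rightarrow> exp" where
  "CertB d = Conj (MemE Z (V 3)) (Conj (AllE (V 2) (LenD d (V 0)))
     (AllE (V 3) (Add (PatE d (V 0) (V 2))
        (ExMove (V 3) (V 1) (Conj (FreeE (V 0) (V 1))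
           (AllMove (V 4) (V 2) (Add (IsZ (FreeE (V 0) (S (Pr (V 1) (V 2)))))
              (MemE (S (Pr (V 0) (S (Pr (V 1) (V 2))))) (V 6)))))))))"

lemma enc_dec_hist[simp]: "enc_hist (dec_hist n) = n"
  by (simp add: enc_hist_def dec_hist_def comp_def)

lemma enc_hist_fold: "Suc (prod_encode (enc_move m, enc_hist t)) = enc_hist (m # t)"
  by (simp add: enc_hist_Cons)

lemma zero_mem: "(0 \<in> enc_hist ` SS) \<longleftrightarrow> [] \<in> SS"
  by (metis enc_hist_Nil enc_hist_mem)

lemma ev_CertB:
  "ev (CertB d) (k # Fc # Ec # Tc # rest) = 0 \<longleftrightarrow>
   \<not> certL d k (map dec_pat (list_decode Fc)) (map dec_cell (list_decode Ec)) (map dec_hist (list_decode Tc))"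
proof -
  define T where "T = map dec_hist (list_decode Tc)"
  have tc: "list_decode Tc = map enc_hist T" unfolding T_def by (simp add: comp_def)
  define Es where "Es = map dec_cell (list_decode Ec)"
  have ec: "list_decode Ec = map code_cell Es" unfolding Es_def by (simp add: comp_def)
  show ?thesis
    unfolding CertB_def certL_def
    apply (simp add: tc ec enc_hist_fold zero_mem comp_def del: enc_move.simps)
    by blast
qed

definition CheckE :: "nat \<Rightarrow> exp" where
  "CheckE d = Let (Snd (V 0)) (Let (Fst (V 1)) (Let (Snd (V 3)) (Let (Fst (V 4))
      (IsZ (Conj (WFE d (V 1) (V 0)) (CertB d))))))"

lemma ev_CheckE:
  "ev (CheckE d) [enc_cert Es T, code_instance k Fs] = 0 \<longleftrightarrow> wf_instance d k Fs \<and> certL d k Fs Es T"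
proof -
  have a: "map dec_pat (list_decode (list_encode (map code_pattern Fs))) = Fs"
    by (simp add: comp_def)
  have b: "map dec_cell (list_decode (list_encode (map code_cell Es))) = Es"
    by (simp add: comp_def)
  have c: "map dec_hist (list_decode (list_encode (map enc_hist T))) = T"
    by (simp add: comp_def)
  show ?thesis
    unfolding CheckE_def enc_cert_def code_instance_def
    using ev_CertB[of d k "list_encode (map code_pattern Fs)" "list_encode (map code_cell Es)" "list_encode (map enc_hist T)"]
    by (simp add: a b c comp_def del: list_encode.simps)
qed


fun uniq :: "move list \<Rightarrow> bool" where
  "uniq [] = True"
| "uniq (Pass # h) = uniq h"
| "uniq (Col x a # h) = (x \<notin> cellsof h \<and> uniq h)"

definition good :: "nat \<Rightarrow> nat \<Rightarrow> move list \<Rightarrow> bool" where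
  "good d k h \<longleftrightarrow> uniq h \<and> (\<forall>x a. Col x a \<in> set h \<longrightarrow> length x = d \<and> a < k)"

lemma rpos_uniq: "uniq h \<Longrightarrow> rpos h x = Some a \<longleftrightarrow> Col x a \<in> set h"
proof (induction h rule: uniq.induct)
  case (3 y b h)
  then show ?case by (auto simp: cellsof_def)
qed auto

lemma good_Nil[simp]: "good d k []" by (simp add: good_def)

lemma good_step: "good d k h \<Longrightarrow> legal d k (rpos h) m \<Longrightarrow> good d k (m # h)"
  by (cases m) (auto simp: good_def dom_rpos)

lemma mvsL_mvs: "mvsL Es k = mvs k (set Es)"
  unfolding mvsL_def mvs_def by auto

lemma legal_freeL: "m \<in> mvs k E \<Longrightarrow> (\<forall>x\<in>E. length x = d) \<Longrightarrow> legal d k (rpos h) m \<longleftrightarrow> freeL m h"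
  by (cases m) (auto simp: mvs_def dom_rpos cellsof_def)

lemma cd_code: "l < length x \<Longrightarrow> cd (code_cell x) l = x ! l"
  unfolding cd_def code_cell_def by (simp add: hdc_drop)

lemma hd_code_pattern: "q \<noteq> [] \<Longrightarrow> fst (prod_decode (hdc (code_pattern q))) = code_cell (fst (hd q))"
  by (cases q) (auto simp: code_pattern_def)

lemma patL_pat:
  assumes g: "good d k h" and wf: "wf_instance d k Fs"
  shows "patL d Fs h \<longleftrightarrow> pat d Fs (rpos h)"
proof
  assume "patL d Fs h"
  then obtain q where q: "q \<in> set Fs" and alt: "q = [] \<or> (\<exists>m0\<in>set h. m0 \<noteq> Pass \<and>
     (\<forall>(j, a)\<in>set q. \<exists>m'\<in>set h. m' \<noteq> Pass \<and> colc m' = a \<and>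
        vokn d (cellc m') (fst (prod_decode (hdc (code_pattern q)))) (cellc m0) (code_cell j)))"
    unfolding patL_def by blast
  have wq: "\<And>j a. (j, a) \<in> set q \<Longrightarrow> length j = d" using wf q unfolding wf_instance_def wf_pattern_def by auto
  show "pat d Fs (rpos h)"
  proof (cases "q = []")
    case True
    then have "appears d q (rpos h)" unfolding appears_def by (intro exI[of _ "replicate d 0"]) simp
    then show ?thesis using q unfolding pat_def by blast
  next
    case False
    then obtain m0 where m0: "m0 \<in> set h" "m0 \<noteq> Pass" and
      all: "\<forall>(j, a)\<in>set q. \<exists>m'\<in>set h. m' \<noteq> Pass \<and> colc m' = a \<and>
        vokn d (cellc m') (code_cell (fst (hd q))) (cellc m0) (code_cell j)"
      using alt hd_code_pattern by auto
    obtain x0 a0 where x0: "m0 = Col x0 a0" using m0(2) by (cases m0) auto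
    have lx0: "length x0 = d" using g m0 x0 unfolding good_def by auto
    define j0 where "j0 = fst (hd q)"
    have lj0: "length j0 = d" using wq False unfolding j0_def by (metis hd_in_set prod.collapse)
    define v where "v = map2 (-) x0 j0"
    have lv: "length v = d" unfolding v_def using lx0 lj0 by simp
    have "\<forall>(j, a)\<in>set q. rpos h (map2 (+) v j) = Some a"
    proof (intro ballI, clarify)
      fix j a assume ja: "(j, a) \<in> set q"
      have "\<exists>m'\<in>set h. m' \<noteq> Pass \<and> colc m' = a \<and>
        vokn d (cellc m') (code_cell j0) (cellc m0) (code_cell j)"
        using bspec[OF all ja] unfolding j0_def by simp
      then obtain m' where m': "m' \<in> set h" "m' \<noteq> Pass" "colc m' = a"
        "vokn d (cellc m') (code_cell j0) (cellc m0) (code_cell j)"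
        by blast
      obtain x' a' where x': "m' = Col x' a'" using m'(2) by (cases m') auto
      have lx': "length x' = d" using g m' x' unfolding good_def by auto
      have lj: "length j = d" using wq ja .
      have "x' = map2 (+) v j"
      proof (rule nth_equalityI)
        show "length x' = length (map2 (+) v j)" using lx' lv lj by simp
        fix l assume "l < length x'"
        then have l: "l < d" using lx' by simp
        have "cd (code_cell x') l + cd (code_cell j0) l = cd (code_cell x0) l + cd (code_cell j) l"
          using m'(4) x' x0 l unfolding vokn_def by simp
        then have "x' ! l + j0 ! l = x0 ! l + j ! l" using l lx' lj0 lx0 lj by (simp add: cd_code)
        then show "x' ! l = map2 (+) v j ! l" using l lv lj lx0 lj0 unfolding v_def by simp
      qed
      moreover have "Col x' a \<in> set h" using m' x' by simp
      moreover have "uniq h" using g unfolding good_def by simp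
      ultimately show "rpos h (map2 (+) v j) = Some a"
        using rpos_uniq by metis
    qed
    then have "appears d q (rpos h)" unfolding appears_def using lv by blast
    then show ?thesis using q unfolding pat_def by blast
  qed
next
  assume "pat d Fs (rpos h)"
  then obtain q v where q: "q \<in> set Fs" and lv: "length v = d"
    and all: "\<forall>(j, a)\<in>set q. rpos h (map2 (+) v j) = Some a"
    unfolding pat_def appears_def by blast
  have wq: "\<And>j a. (j, a) \<in> set q \<Longrightarrow> length j = d" using wf q unfolding wf_instance_def wf_pattern_def by auto
  have u: "uniq h" using g unfolding good_def by simp
  show "patL d Fs h"
  proof (cases "q = []")
    case True then show ?thesis using q unfolding patL_def by blast
  next
    case False
    define j0 where "j0 = fst (hd q)"
    define a0 where "a0 = snd (hd q)"
    have hq: "(j0, a0) \<in> set q" using False unfolding j0_def a0_def by simp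
    have "rpos h (map2 (+) v j0) = Some a0" using bspec[OF all hq] by simp
    then have m0: "Col (map2 (+) v j0) a0 \<in> set h" using rpos_uniq[OF u] by blast
    have lj0: "length j0 = d" using wq hq .
    have "\<forall>(j, a)\<in>set q. \<exists>m'\<in>set h. m' \<noteq> Pass \<and> colc m' = a \<and>
        vokn d (cellc m') (code_cell j0) (cellc (Col (map2 (+) v j0) a0)) (code_cell j)"
    proof (intro ballI, clarify)
      fix j a assume ja: "(j, a) \<in> set q"
      have lj: "length j = d" using wq ja .
      have "rpos h (map2 (+) v j) = Some a" using bspec[OF all ja] by simp
      then have "Col (map2 (+) v j) a \<in> set h" using rpos_uniq[OF u] by blast
      moreover have "vokn d (code_cell (map2 (+) v j)) (code_cell j0) (code_cell (map2 (+) v j0)) (code_cell j)"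
        unfolding vokn_def using lv lj lj0 by (simp add: cd_code)
      ultimately show "\<exists>m'\<in>set h. m' \<noteq> Pass \<and> colc m' = a \<and>
        vokn d (cellc m') (code_cell j0) (cellc (Col (map2 (+) v j0) a0)) (code_cell j)"
        by (intro bexI[of _ "Col (map2 (+) v j) a"]) auto
    qed
    then have "\<exists>m0\<in>set h. m0 \<noteq> Pass \<and>
     (\<forall>(j, a)\<in>set q. \<exists>m'\<in>set h. m' \<noteq> Pass \<and> colc m' = a \<and>
        vokn d (cellc m') (fst (prod_decode (hdc (code_pattern q)))) (cellc m0) (code_cell j))"
      using m0 hd_code_pattern[OF False] unfolding j0_def by (intro bexI[of _ "Col (map2 (+) v (fst (hd q))) a0"]) auto
    then show ?thesis using q unfolding patL_def by blast
  qed
qed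


definition closedT :: "nat \<Rightarrow> nat \<Rightarrow> fpattern list \<Rightarrow> cell set \<Rightarrow> move list set \<Rightarrow> bool" where
  "closedT d k Fs E TT \<longleftrightarrow> (\<forall>t\<in>TT. pat d Fs (rpos t) \<or> (\<exists>a\<in>mvs k E. legal d k (rpos t) a \<and>
      (\<forall>b\<in>mvs k E. legal d k (rpos (a # t)) b \<longrightarrow> b # a # t \<in> TT)))"

lemma win_tree:
  assumes "win d k Fs E h" "finite E" "good d k h"
  shows "\<exists>TT. finite TT \<and> h \<in> TT \<and> (\<forall>t\<in>TT. good d k t) \<and> closedT d k Fs E TT"
  using assms
proof (induction rule: win.induct)
  case (wbase h)
  then show ?case unfolding closedT_def by (intro exI[of _ "{h}"]) auto
next
  case (wstep a h)
  define B where "B = {b \<in> mvs k E. legal d k (rpos (a # h)) b}"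
  have finB: "finite B" unfolding B_def using finite_mvs[OF wstep.prems(1)] by simp
  have ga: "good d k (a # h)" using good_step wstep.prems(2) wstep.hyps(2) by blast
  have "\<forall>b\<in>B. \<exists>TT. finite TT \<and> b # a # h \<in> TT \<and> (\<forall>t\<in>TT. good d k t) \<and> closedT d k Fs E TT"
  proof
    fix b assume b: "b \<in> B"
    then have "good d k (b # a # h)" using good_step ga unfolding B_def by blast
    then show "\<exists>TT. finite TT \<and> b # a # h \<in> TT \<and> (\<forall>t\<in>TT. good d k t) \<and> closedT d k Fs E TT"
      using wstep.IH b wstep.prems(1) unfolding B_def by blast
  qed
  then obtain f where f: "\<And>b. b \<in> B \<Longrightarrow> finite (f b) \<and> b # a # h \<in> f b \<and> (\<forall>t\<in>f b. good d k t) \<and> closedT d k Fs E (f b)"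
    by metis
  define TT where "TT = insert h (\<Union>b\<in>B. f b)"
  have fin: "finite TT" unfolding TT_def using finB f by auto
  have gd: "\<forall>t\<in>TT. good d k t" unfolding TT_def using f wstep.prems(2) by auto
  have cl: "closedT d k Fs E TT"
    unfolding closedT_def
  proof
    fix t assume t: "t \<in> TT"
    show "pat d Fs (rpos t) \<or> (\<exists>a\<in>mvs k E. legal d k (rpos t) a \<and>
      (\<forall>b\<in>mvs k E. legal d k (rpos (a # t)) b \<longrightarrow> b # a # t \<in> TT))"
    proof (cases "t = h")
      case True
      have "\<forall>b\<in>mvs k E. legal d k (rpos (a # t)) b \<longrightarrow> b # a # t \<in> TT"
        using f True unfolding TT_def B_def by blast
      then show ?thesis using wstep.hyps(1,2) True by blast
    next
      case False
      then obtain b where b: "b \<in> B" "t \<in> f b" using t unfolding TT_def by auto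
      then have "pat d Fs (rpos t) \<or> (\<exists>a\<in>mvs k E. legal d k (rpos t) a \<and>
        (\<forall>b'\<in>mvs k E. legal d k (rpos (a # t)) b' \<longrightarrow> b' # a # t \<in> f b))"
        using f[OF b(1)] unfolding closedT_def by blast
      moreover have "f b \<subseteq> TT" using b unfolding TT_def by auto
      ultimately show ?thesis by blast
    qed
  qed
  show ?case using fin gd cl unfolding TT_def by blast
qed

definition prj :: "cell set \<Rightarrow> move \<Rightarrow> move" where
  "prj E mv = (case mv of Pass \<Rightarrow> Pass | Col x a \<Rightarrow> if x \<in> E then Col x a else Pass)"

lemma rpos_prj: "rpos (map (prj E) r) = rpos r |` E"
proof (induction r rule: rpos.induct)
  case 1 then show ?case by simp
next
  case (2 h) then show ?case by (simp add: prj_def)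
next
  case (3 x a h) then show ?case by (auto simp: prj_def restrict_map_def fun_eq_iff)
qed

lemma restrict_le: "p |` E \<subseteq>\<^sub>m p"
  by (auto simp: map_le_def restrict_map_def)

lemma prj_mvs: "a \<in> mvs k E \<Longrightarrow> prj E a = a"
  by (auto simp: mvs_def prj_def)

lemma legal_restrict: "a \<in> mvs k E \<Longrightarrow> legal d k (p |` E) a \<Longrightarrow> legal d k p a"
  by (cases a) (auto simp: mvs_def restrict_map_def split: if_splits)

lemma legal_prj: "legal d k p b \<Longrightarrow> prj E b \<in> mvs k E \<and> legal d k (p |` E) (prj E b)"
  by (cases b) (auto simp: mvs_def prj_def restrict_map_def)

lemma rev_upt2: "map (prj E) (rev (map m [0..<2*Suc i])) = prj E (m (2*i+1)) # prj E (m (2*i)) # map (prj E) (rev (map m [0..<2*i]))"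
  by (simp add: numeral_2_eq_2)

lemma rev_upt1: "map (prj E) (rev (map m [0..<2*i+1])) = prj E (m (2*i)) # map (prj E) (rev (map m [0..<2*i]))"
  by simp

lemma strategy:
  assumes fin: "finite TT" and root: "[] \<in> TT"
    and cl: "\<forall>t\<in>TT. good d k t \<longrightarrow> (pat d Fs (rpos t) \<or> (\<exists>a\<in>mvs k E. legal d k (rpos t) a \<and>
      (\<forall>b\<in>mvs k E. legal d k (rpos (a # t)) b \<longrightarrow> b # a # t \<in> TT)))"
  shows "A_wins d k Fs"
proof -
  define gA where "gA a r \<longleftrightarrow> a \<in> mvs k E \<and> legal d k (rpos r) a \<and>
      (\<forall>b\<in>mvs k E. legal d k (rpos (a # r)) b \<longrightarrow> b # a # r \<in> TT)" for a r
  define \<sigma> where "\<sigma> hist = (let r = map (prj E) (rev hist) in if \<exists>a. gA a r then SOME a. gA a r else Pass)" for hist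
  define L where "L = Max (length ` TT)"
  have Lge: "t \<in> TT \<Longrightarrow> length t \<le> L" for t unfolding L_def using fin by simp
  show ?thesis
    unfolding A_wins_def
  proof (rule exI[of _ \<sigma>], intro allI impI)
    fix m :: "nat \<Rightarrow> move"
    assume asm: "(\<forall>i. m (2*i) = \<sigma> (map m [0..<2*i])) \<and> (\<forall>i. legal d k (pos m (2*i+1)) (m (2*i+1)))"
    then have mA: "\<And>i. m (2*i) = \<sigma> (map m [0..<2*i])" and mB: "\<And>i. legal d k (pos m (2*i+1)) (m (2*i+1))"
      by auto
    define r where "r i = map (prj E) (rev (map m [0..<2*i]))" for i
    have rp: "rpos (r i) = pos m (2*i) |` E" for i unfolding r_def by (simp add: rpos_prj pos_rpos)
    have key: "\<And>i. L - 2*i = N \<Longrightarrow> r i \<in> TT \<Longrightarrow> good d k (r i) \<Longrightarrow> (\<forall>j<2*i. legal d k (pos m j) (m j)) \<Longrightarrow>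
        \<exists>n. (\<forall>j<n. legal d k (pos m j) (m j)) \<and> (\<exists>q\<in>set Fs. appears d q (pos m n))" for N
    proof (induction N rule: less_induct)
      case (less N)
      fix i assume N: "L - 2*i = N" and rT: "r i \<in> TT" and g: "good d k (r i)"
        and lg: "\<forall>j<2*i. legal d k (pos m j) (m j)"
      show "\<exists>n. (\<forall>j<n. legal d k (pos m j) (m j)) \<and> (\<exists>q\<in>set Fs. appears d q (pos m n))"
      proof (cases "pat d Fs (rpos (r i))")
        case True
        then have "pat d Fs (pos m (2*i))" using rp pat_mono restrict_le by metis
        then show ?thesis using lg unfolding pat_def by blast
      next
        case False
        then have "\<exists>a. gA a (r i)" using cl rT g unfolding gA_def by blast
        then have ga: "gA (m (2*i)) (r i)"
          using mA[of i] unfolding \<sigma>_def r_def by (simp add: Let_def) (rule someI_ex)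
        define a where "a = m (2*i)"
        have am: "a \<in> mvs k E" and al: "legal d k (rpos (r i)) a"
          and ach: "\<And>b. b \<in> mvs k E \<Longrightarrow> legal d k (rpos (a # r i)) b \<Longrightarrow> b # a # r i \<in> TT"
          using ga unfolding gA_def a_def by auto
        have aleg: "legal d k (pos m (2*i)) (m (2*i))"
          using legal_restrict[OF am] al rp unfolding a_def by metis
        have r1: "rpos (a # r i) = pos m (2*i+1) |` E"
        proof -
          have "a # r i = map (prj E) (rev (map m [0..<2*i+1]))"
            unfolding r_def a_def using prj_mvs[OF am] rev_upt1[of E m i] unfolding a_def by simp
          then show ?thesis by (simp only: rpos_prj pos_rpos)
        qed
        define b where "b = prj E (m (2*i+1))"
        have bm: "b \<in> mvs k E" and bl: "legal d k (rpos (a # r i)) b"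
          using legal_prj[OF mB[of i], of E] r1 unfolding b_def by auto
        have rs: "r (Suc i) = b # a # r i"
          unfolding r_def b_def a_def using rev_upt2[of E m i] prj_mvs[OF am] unfolding a_def by simp
        have rT': "r (Suc i) \<in> TT" using ach[OF bm bl] rs by simp
        have g': "good d k (r (Suc i))" using rs good_step[OF good_step[OF g al] bl] by simp
        have lg': "\<forall>j<2*Suc i. legal d k (pos m j) (m j)"
          using lg aleg mB[of i] by (auto simp: less_Suc_eq)
        have "length (r (Suc i)) \<le> L" using Lge[OF rT'] .
        then have "2 * Suc i \<le> L" unfolding r_def by simp
        then have lt: "L - 2 * Suc i < N" using N by simp
        show ?thesis using less.IH[OF lt refl rT' g' lg'] .
      qed
    qed
    have "r 0 = []" unfolding r_def by simp
    then show "\<exists>n. (\<forall>j<n. legal d k (pos m j) (m j)) \<and> (\<exists>q\<in>set Fs. appears d q (pos m n))"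
      using key[OF refl, of 0] root by simp
  qed
qed


lemma finite_list_ex: "finite A \<Longrightarrow> \<exists>xs. set xs = A"
  using finite_list by blast

theorem main_equiv:
  assumes wf: "wf_instance d k Fs"
  shows "A_wins d k Fs \<longleftrightarrow> (\<exists>Es T. certL d k Fs Es T)"
proof
  assume "A_wins d k Fs"
  then obtain R where w: "win d k Fs (ER d R) []" using compactness by blast
  obtain TT where TT: "finite TT" "[] \<in> TT" "\<forall>t\<in>TT. good d k t" "closedT d k Fs (ER d R) TT"
    using win_tree[OF w finite_ER good_Nil] by blast
  obtain Es where Es: "set Es = ER d R" using finite_list_ex[OF finite_ER] by blast
  obtain T where T: "set T = TT" using finite_list_ex[OF TT(1)] by blast
  have EL: "\<forall>x\<in>set Es. length x = d" using Es unfolding ER_def by auto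
  have "certL d k Fs Es T"
    unfolding certL_def
  proof (intro conjI ballI)
    show "[] \<in> set T" using T TT by simp
    show "\<And>x. x \<in> set Es \<Longrightarrow> length x = d" using EL by blast
  next
    fix t assume t: "t \<in> set T"
    then have g: "good d k t" using T TT by auto
    have "pat d Fs (rpos t) \<or> (\<exists>a\<in>mvs k (set Es). legal d k (rpos t) a \<and>
      (\<forall>b\<in>mvs k (set Es). legal d k (rpos (a # t)) b \<longrightarrow> b # a # t \<in> set T))"
      using TT(4) t T Es unfolding closedT_def by auto
    then show "patL d Fs t \<or> (\<exists>a\<in>mvsL Es k. freeL a t \<and>
        (\<forall>b\<in>mvsL Es k. freeL b (a # t) \<longrightarrow> b # a # t \<in> set T))"
      using patL_pat[OF g wf] legal_freeL[OF _ EL] unfolding mvsL_mvs by metis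
  qed
  then show "\<exists>Es T. certL d k Fs Es T" by blast
next
  assume "\<exists>Es T. certL d k Fs Es T"
  then obtain Es T where c: "certL d k Fs Es T" by blast
  have EL: "\<forall>x\<in>set Es. length x = d" and root: "[] \<in> set T" using c unfolding certL_def by auto
  show "A_wins d k Fs"
  proof (rule strategy[of "set T" d k Fs "set Es"])
    show "finite (set T)" by simp
    show "[] \<in> set T" by (rule root)
    show "\<forall>t\<in>set T. good d k t \<longrightarrow> (pat d Fs (rpos t) \<or> (\<exists>a\<in>mvs k (set Es). legal d k (rpos t) a \<and>
      (\<forall>b\<in>mvs k (set Es). legal d k (rpos (a # t)) b \<longrightarrow> b # a # t \<in> set T)))"
    proof (intro ballI impI)
      fix t assume t: "t \<in> set T" and g: "good d k t"
      have "patL d Fs t \<or> (\<exists>a\<in>mvsL Es k. freeL a t \<and>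
        (\<forall>b\<in>mvsL Es k. freeL b (a # t) \<longrightarrow> b # a # t \<in> set T))"
        using c t unfolding certL_def by blast
      then show "pat d Fs (rpos t) \<or> (\<exists>a\<in>mvs k (set Es). legal d k (rpos t) a \<and>
        (\<forall>b\<in>mvs k (set Es). legal d k (rpos (a # t)) b \<longrightarrow> b # a # t \<in> set T))"
        using patL_pat[OF g wf] legal_freeL[OF _ EL] unfolding mvsL_mvs by metis
    qed
  qed
qed

lemma code_pattern_dec: "code_pattern (dec_pat x) = x"
  unfolding dec_pat_def code_pattern_def by (simp add: comp_def case_prod_beta)

lemma code_instance_surj: "\<exists>k Fs. n = code_instance k Fs"
proof -
  obtain k l where kl: "prod_decode n = (k, l)" by (cases "prod_decode n")
  have "code_instance k (map dec_pat (list_decode l)) = n"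
    unfolding code_instance_def using kl by (simp add: comp_def code_pattern_dec)
       (metis prod_decode_inverse)
  then show ?thesis by metis
qed

lemma enc_cert_surj: "\<exists>Es T. c = enc_cert Es T"
proof -
  obtain e t where et: "prod_decode c = (e, t)" by (cases "prod_decode c")
  have "enc_cert (map dec_cell (list_decode e)) (map dec_hist (list_decode t)) = c"
    unfolding enc_cert_def using et by (simp add: comp_def) (metis prod_decode_inverse)
  then show ?thesis by metis
qed

lemma code_instance_inj: "code_instance k Fs = code_instance k' Fs' \<Longrightarrow> k = k' \<and> Fs = Fs'"
proof -
  assume "code_instance k Fs = code_instance k' Fs'"
  then have "k = k'" "map code_pattern Fs = map code_pattern Fs'"
    unfolding code_instance_def by (auto simp: list_encode_eq)
  moreover have "map dec_pat (map code_pattern xs) = xs" for xs by (simp add: comp_def)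
  ultimately show ?thesis by metis
qed

theorem proposition1:
  fixes d :: nat
  assumes "d > 0"
  shows "r_e (domino_problem d)"
proof (rule re_from_exp[of _ "CheckE d"])
  fix n
  obtain k Fs where n: "n = code_instance k Fs" using code_instance_surj by blast
  have "n \<in> domino_problem d \<longleftrightarrow> wf_instance d k Fs \<and> A_wins d k Fs"
    unfolding domino_problem_def n using code_instance_inj by blast
  also have "\<dots> \<longleftrightarrow> (\<exists>Es T. wf_instance d k Fs \<and> certL d k Fs Es T)"
    using main_equiv by blast
  also have "\<dots> \<longleftrightarrow> (\<exists>Es T. ev (CheckE d) [enc_cert Es T, n] = 0)"
    unfolding n ev_CheckE by blast
  also have "\<dots> \<longleftrightarrow> (\<exists>c. ev (CheckE d) [c, n] = 0)"
    using enc_cert_surj by metis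
  finally show "n \<in> domino_problem d \<longleftrightarrow> (\<exists>c. ev (CheckE d) [c, n] = 0)" .
qed


end
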